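(* Let $T(z)=z/(1-z)$ and, for a plane binary tree $t$, let $S_t(z)$ and its dominant singularity $\tilde\rho=\tilde\rho(t)$ be as in the context. Then for every $\eta>0$ there is $D>0$ independent of $n$ such that \[ \frac{[z^n]S_t(z)}{[z^n]T(z)} = \tilde\rho^{-n-1}\left(1+\mathcal{O}\!\left(\frac{\ln n}{n^{1-\eta}}\right)\right)\quad\text{as } n\to\infty, \] uniformly for all plane binary trees $t$ with $D\le |t|\le n$.
   Context: A plane binary tree is a rooted tree in which each node has a left and a right slot, each empty or holding a subtree; $|t|$ is its number of nodes. A plane increasing binary tree of size $n$ is such a tree whose $n$ nodes are labeled $1,\dots,n$ increasingly along every path from the root; their exponential generating function is $T(z)=z/(1-z)$. A fringe subtree is a node with all its descendants; its shape is obtained by forgetting labels. For $t$ with $k$ nodes, $w(t)=\ell(t)/k!$ where $\ell(t)$ is the number of increasing labelings of $t$. $S_t$ is the exponential generating function of plane increasing binary trees with no fringe subtree of shape $t$, the power series solution of $S_t'=(1+S_t)^2-w(t)kz^{k-1}$, $S_t(0)=0$; one has $S_t=-u'/u$ with $u$ the entire solution of $u''-2u'+(1-w(t)kz^{k-1})u=0$, $u(0)=-1$, $u'(0)=0$, and $\tilde\rho>1$ is the smallest positive zero of $u$. *)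

theory Defs
  imports "HOL-Analysis.Analysis" "HOL-Computational_Algebra.Formal_Power_Series"
          "HOL-Library.FuncSet" "HOL-Library.Sublist"
begin

text \<open>Plane binary trees: Leaf is an empty slot, Node l r a node with left/right slots.\<close>
datatype ptree = Leaf | Node ptree ptree

fun tsize :: "ptree \<Rightarrow> nat" where
  "tsize Leaf = 0"
| "tsize (Node l r) = Suc (tsize l + tsize r)"

fun positions :: "ptree \<Rightarrow> bool list set" where
  "positions Leaf = {}"
| "positions (Node l r) = insert [] ((\<lambda>p. False # p) ` positions l \<union> (\<lambda>p. True # p) ` positions r)"

definition nlab :: "ptree \<Rightarrow> nat" where
  "nlab t = card {f. f \<in> positions t \<rightarrow>\<^sub>E {1..tsize t} \<and>
                     bij_betw f (positions t) {1..tsize t} \<and>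
                     (\<forall>p\<in>positions t. \<forall>q\<in>positions t. strict_prefix p q \<longrightarrow> f p < f q)}"

definition wt :: "ptree \<Rightarrow> real" where
  "wt t = real (nlab t) / fact (tsize t)"

definition T_fps :: "real fps" where
  "T_fps = fps_X / (1 - fps_X)"

definition S_fps :: "ptree \<Rightarrow> real fps" where
  "S_fps t = (THE S. fps_nth S 0 = 0 \<and>
      fps_deriv S = (1 + S)^2 - fps_const (wt t * real (tsize t)) * fps_X ^ (tsize t - 1))"

definition u_sol :: "ptree \<Rightarrow> real \<Rightarrow> real" where
  "u_sol t = (THE u. u 0 = -1 \<and> (\<exists>u'. u' 0 = 0 \<and> (\<forall>x.
      (u has_real_derivative u' x) (at x) \<and>
      (u' has_real_derivative
          (2 * u' x - (1 - wt t * real (tsize t) * x ^ (tsize t - 1)) * u x)) (at x))))"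

definition rho :: "ptree \<Rightarrow> real" where
  "rho t = (THE r. 0 < r \<and> u_sol t r = 0 \<and> (\<forall>x. 0 < x \<and> x < r \<longrightarrow> u_sol t x \<noteq> 0))"

end

theory Submission
  imports Defs "HOL-Complex_Analysis.Complex_Analysis" "HOL-Real_Asymp.Real_Asymp"
begin

lemma finite_positions [simp]: "finite (positions t)"
  by (induction t) auto

lemma card_positions: "card (positions t) = tsize t"
proof (induction t)
  case Leaf then show ?case by simp
next
  case (Node l r)
  have d: "((#) False ` positions l) \<inter> ((#) True ` positions r) = {}" by auto
  have "card ((#) False ` positions l \<union> (#) True ` positions r) = tsize l + tsize r"
    using Node by (subst card_Un_disjoint) (auto simp: card_image d)
  moreover have "[] \<notin> (#) False ` positions l \<union> (#) True ` positions r" by auto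
  ultimately show ?case by simp
qed

definition Lset :: "ptree \<Rightarrow> nat set \<Rightarrow> (bool list \<Rightarrow> nat) set" where
  "Lset t S = {f. f \<in> positions t \<rightarrow>\<^sub>E S \<and> bij_betw f (positions t) S \<and>
                     (\<forall>p\<in>positions t. \<forall>q\<in>positions t. strict_prefix p q \<longrightarrow> f p < f q)}"

lemma finite_Lset: "finite S \<Longrightarrow> finite (Lset t S)"
  unfolding Lset_def by (rule finite_subset[OF _ finite_PiE[of "positions t" "\<lambda>_. S"]]) auto

definition th :: real where "th = 2/3"

lemma l1: "real ((a + b) choose a) * ((fact a * th ^ (a - 1)) * (fact b * th ^ (b - 1))) = fact (a + b) * (th ^ (a - 1) * th ^ (b - 1))"
proof -
  have "fact a * fact b * ((a + b) choose a) = (fact (a + b) :: nat)"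
    using binomial_fact_lemma[of a "a+b"] by simp
  then have "real (fact a * fact b * ((a + b) choose a)) = real (fact (a + b))" by (rule arg_cong)
  then have "fact a * fact b * real ((a + b) choose a) = fact (a + b)"
    by (simp only: of_nat_mult of_nat_fact)
  note h = this
  have "real ((a + b) choose a) * ((fact a * th ^ (a - 1)) * (fact b * th ^ (b - 1))) = (fact a * fact b * real ((a + b) choose a)) * (th ^ (a - 1) * th ^ (b - 1))"
    by (simp only: mult_ac)
  also have "\<dots> = fact (a + b) * (th ^ (a - 1) * th ^ (b - 1))" by (simp only: h)
  finally show ?thesis .
qed

lemma key: assumes kab: "k = Suc (a + b)" shows "th ^ (a - 1) * th ^ (b - 1) \<le> real k * th ^ (k - 1)"
proof (cases "a = 0"; cases "b = 0")
  assume "a = 0" "b = 0" then show ?thesis using kab by simp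
next
  assume "a = 0" "b \<noteq> 0"
  then obtain b' where b: "b = Suc b'" by (cases b) auto
  have "1 \<le> real k * th" using kab b by (simp add: th_def)
  then have "1 * th ^ b' \<le> (real k * th) * th ^ b'" by (intro mult_right_mono) (auto simp: th_def)
  then show ?thesis using \<open>a = 0\<close> b kab by (simp add: mult_ac)
next
  assume "a \<noteq> 0" "b = 0"
  then obtain a' where a: "a = Suc a'" by (cases a) auto
  have "1 \<le> real k * th" using kab a by (simp add: th_def)
  then have "1 * th ^ a' \<le> (real k * th) * th ^ a'" by (intro mult_right_mono) (auto simp: th_def)
  then show ?thesis using \<open>b = 0\<close> a kab by (simp add: mult_ac)
next
  assume "a \<noteq> 0" "b \<noteq> 0"
  then obtain a' b' where a: "a = Suc a'" and b: "b = Suc b'" by (cases a; cases b) auto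
  have k3: "real k \<ge> 3" using kab a b by simp
  have "1 \<le> real k * (th * th)" using k3 by (simp add: th_def)
  then have "1 * th ^ (a' + b') \<le> (real k * (th * th)) * th ^ (a' + b')" by (intro mult_right_mono) (auto simp: th_def)
  moreover have "k - 1 = Suc (Suc (a' + b'))" using kab a b by simp
  ultimately show ?thesis using a b by (simp add: power_add mult_ac)
qed

lemma Lset_restrict:
  assumes inj: "inj_on (\<lambda>p. f (c # p)) (positions t)"
    and inc: "\<forall>p\<in>positions t. \<forall>q\<in>positions t. strict_prefix p q \<longrightarrow> f (c # p) < f (c # q)"
  shows "(\<lambda>p. if p \<in> positions t then f (c # p) else undefined) \<in> Lset t ((\<lambda>p. f (c # p)) ` positions t)"
proof -
  let ?g = "\<lambda>p. if p \<in> positions t then f (c # p) else undefined"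
  have "?g \<in> positions t \<rightarrow>\<^sub>E (\<lambda>p. f (c # p)) ` positions t"
    by (rule PiE_I) auto
  moreover have "inj_on ?g (positions t)"
    using inj unfolding inj_on_def by simp
  moreover have "?g ` positions t = (\<lambda>p. f (c # p)) ` positions t"
    by (rule image_cong) auto
  moreover have "\<forall>p\<in>positions t. \<forall>q\<in>positions t. strict_prefix p q \<longrightarrow> ?g p < ?g q"
    using inc by simp
  ultimately show ?thesis unfolding Lset_def bij_betw_def by blast
qed

lemma Lset_bound:
  "finite S \<Longrightarrow> card S = tsize t \<Longrightarrow> real (card (Lset t S)) \<le> fact (card S) * th ^ (card S - 1)"
proof (induction t arbitrary: S)
  case Leaf
  then have "S = {}" by simp
  then have "Lset Leaf S \<subseteq> {\<lambda>_. undefined}" unfolding Lset_def by auto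
  note sub = this
  have "card (Lset Leaf S) \<le> 1"
    using card_mono[OF _ sub] by simp
  then show ?case using \<open>S = {}\<close> by simp
next
  case (Node l r)
  define k where "k = card S"
  define a where "a = tsize l"
  define b where "b = tsize r"
  have kab: "k = Suc (a + b)" using Node.prems by (simp add: k_def a_def b_def)
  then have "S \<noteq> {}" using k_def by auto
  define m where "m = Min S"
  define S' where "S' = S - {m}"
  have mS: "m \<in> S" using \<open>S \<noteq> {}\<close> Node.prems(1) m_def by simp
  have cS': "card S' = a + b" using kab k_def mS Node.prems(1) S'_def by simp
  have fS': "finite S'" using Node.prems(1) S'_def by simp
  define AA where "AA = {A. A \<subseteq> S' \<and> card A = a}"
  define \<Phi> where "\<Phi> = (\<lambda>f::bool list \<Rightarrow> nat. (\<lambda>p. if p \<in> positions l then f (False # p) else undefined,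
                                  \<lambda>p. if p \<in> positions r then f (True # p) else undefined))"
  have froot: "f [] = m" if f: "f \<in> Lset (Node l r) S" for f
  proof -
    have bij: "bij_betw f (positions (Node l r)) S" and inc: "\<forall>p\<in>positions (Node l r). \<forall>q\<in>positions (Node l r). strict_prefix p q \<longrightarrow> f p < f q"
      using f by (auto simp: Lset_def)
    have "f [] \<in> S" using bij by (auto simp: bij_betw_def)
    moreover have "f [] \<le> s" if "s \<in> S" for s
    proof -
      obtain p where p: "p \<in> positions (Node l r)" "s = f p" using bij \<open>s \<in> S\<close> by (auto simp: bij_betw_def)
      show ?thesis
      proof (cases "p = []")
        case False
        then have "strict_prefix [] p" by (simp add: strict_prefix_def)
        then show ?thesis using inc p by force
      qed (use p in simp)
    qed
    ultimately show ?thesis unfolding m_def using Node.prems(1) by (intro Min_eqI[symmetric]) auto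
  qed
  have sub: "\<Phi> ` Lset (Node l r) S \<subseteq> (\<Union>A\<in>AA. Lset l A \<times> Lset r (S' - A))"
  proof
    fix x assume "x \<in> \<Phi> ` Lset (Node l r) S"
    then obtain f where f: "f \<in> Lset (Node l r) S" and x: "x = \<Phi> f" by auto
    have fr: "f [] = m" using froot f by blast
    have bij: "bij_betw f (positions (Node l r)) S"
      and inc: "\<forall>p\<in>positions (Node l r). \<forall>q\<in>positions (Node l r). strict_prefix p q \<longrightarrow> f p < f q"
      using f unfolding Lset_def by blast+
    have inj: "inj_on f (positions (Node l r))" and img: "f ` positions (Node l r) = S"
      using bij unfolding bij_betw_def by blast+
    define A where "A = f ` ((#) False ` positions l)"
    define B where "B = f ` ((#) True ` positions r)"
    have posN: "positions (Node l r) = insert [] ((#) False ` positions l \<union> (#) True ` positions r)"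
      by simp
    have "S = f ` insert [] ((#) False ` positions l \<union> (#) True ` positions r)"
      using img posN by simp
    also have "\<dots> = insert m (A \<union> B)" unfolding A_def B_def image_insert image_Un fr ..
    finally have SU: "S = insert m (A \<union> B)" .
    have mA: "m \<notin> A"
    proof
      assume "m \<in> A"
      then obtain p where p: "p \<in> positions l" "m = f (False # p)" unfolding A_def by auto
      have "[] = False # p"
        by (rule inj_onD[OF inj]) (use p fr posN in auto)
      then show False by simp
    qed
    have mB: "m \<notin> B"
    proof
      assume "m \<in> B"
      then obtain p where p: "p \<in> positions r" "m = f (True # p)" unfolding B_def by auto
      have "[] = True # p"
        by (rule inj_onD[OF inj]) (use p fr posN in auto)
      then show False by simp
    qed
    have AB: "A \<inter> B = {}"
    proof (rule ccontr)
      assume "A \<inter> B \<noteq> {}"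
      then obtain p p' where p: "p \<in> positions l" "p' \<in> positions r" "f (False # p) = f (True # p')"
        unfolding A_def B_def by auto
      have "False # p = True # p'"
        by (rule inj_onD[OF inj]) (use p posN in auto)
      then show False by simp
    qed
    have AS': "A \<subseteq> S'" using SU mA unfolding S'_def by blast
    have BS': "B = S' - A" using SU mA mB AB unfolding S'_def by blast
    have injL: "inj_on (\<lambda>p. f (False # p)) (positions l)"
    proof (rule inj_onI)
      fix p p' assume "p \<in> positions l" "p' \<in> positions l" "f (False # p) = f (False # p')"
      then have "False # p = False # p'" by (intro inj_onD[OF inj]) (use posN in auto)
      then show "p = p'" by simp
    qed
    have injR: "inj_on (\<lambda>p. f (True # p)) (positions r)"
    proof (rule inj_onI)
      fix p p' assume "p \<in> positions r" "p' \<in> positions r" "f (True # p) = f (True # p')"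
      then have "True # p = True # p'" by (intro inj_onD[OF inj]) (use posN in auto)
      then show "p = p'" by simp
    qed
    have Aim: "A = (\<lambda>p. f (False # p)) ` positions l" unfolding A_def image_image ..
    have Bim: "B = (\<lambda>p. f (True # p)) ` positions r" unfolding B_def image_image ..
    have cA: "card A = a" unfolding Aim a_def card_positions[symmetric]
      by (rule card_image[OF injL])
    have incL: "\<forall>p\<in>positions l. \<forall>q\<in>positions l. strict_prefix p q \<longrightarrow> f (False # p) < f (False # q)"
    proof (intro ballI impI)
      fix p q assume "p \<in> positions l" "q \<in> positions l" "strict_prefix p q"
      then show "f (False # p) < f (False # q)" using inc posN by simp
    qed
    have incR: "\<forall>p\<in>positions r. \<forall>q\<in>positions r. strict_prefix p q \<longrightarrow> f (True # p) < f (True # q)"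
    proof (intro ballI impI)
      fix p q assume "p \<in> positions r" "q \<in> positions r" "strict_prefix p q"
      then show "f (True # p) < f (True # q)" using inc posN by simp
    qed
    have L: "fst (\<Phi> f) \<in> Lset l A"
      unfolding Aim using Lset_restrict[OF injL incL] by (simp add: \<Phi>_def)
    have R: "snd (\<Phi> f) \<in> Lset r B"
      unfolding Bim using Lset_restrict[OF injR incR] by (simp add: \<Phi>_def)
    have "A \<in> AA" using AS' cA by (auto simp: AA_def)
    moreover have "x \<in> Lset l A \<times> Lset r (S' - A)"
      using L R BS' x by (simp add: mem_Times_iff)
    ultimately show "x \<in> (\<Union>A\<in>AA. Lset l A \<times> Lset r (S' - A))" by blast
  qed
  have injPhi: "inj_on \<Phi> (Lset (Node l r) S)"
  proof (rule inj_onI)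
    fix f g assume f: "f \<in> Lset (Node l r) S" and g: "g \<in> Lset (Node l r) S" and e: "\<Phi> f = \<Phi> g"
    have ef: "f \<in> positions (Node l r) \<rightarrow>\<^sub>E S" "g \<in> positions (Node l r) \<rightarrow>\<^sub>E S"
      using f g unfolding Lset_def by blast+
    have eL: "f (False # p) = g (False # p)" if "p \<in> positions l" for p
    proof -
      have "fst (\<Phi> f) p = fst (\<Phi> g) p" using e by simp
      then show ?thesis using that unfolding \<Phi>_def by simp
    qed
    have eR: "f (True # p) = g (True # p)" if "p \<in> positions r" for p
    proof -
      have "snd (\<Phi> f) p = snd (\<Phi> g) p" using e by simp
      then show ?thesis using that unfolding \<Phi>_def by simp
    qed
    have e0: "f [] = g []" using froot[OF f] froot[OF g] by simp
    show "f = g"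
    proof
      fix p
      show "f p = g p"
      proof (cases "p \<in> positions (Node l r)")
        case False then show ?thesis using PiE_arb[OF ef(1) False] PiE_arb[OF ef(2) False] by simp
      next
        case True
        show ?thesis
        proof (cases p)
          case Nil then show ?thesis using e0 by simp
        next
          case (Cons x q)
          then have "x = False \<and> q \<in> positions l \<or> x = True \<and> q \<in> positions r"
            using True by auto
          then show ?thesis using eL eR Cons by blast
        qed
      qed
    qed
  qed
  have finAA: "finite AA" using fS' unfolding AA_def by (simp add: finite_subset)
  have "card (Lset (Node l r) S) = card (\<Phi> ` Lset (Node l r) S)"
    by (simp add: card_image[OF injPhi])
  also have "\<dots> \<le> card (\<Union>A\<in>AA. Lset l A \<times> Lset r (S' - A))"
    using sub finAA fS' by (intro card_mono) (auto intro!: finite_Lset simp: AA_def intro: finite_subset)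
  also have "\<dots> \<le> (\<Sum>A\<in>AA. card (Lset l A \<times> Lset r (S' - A)))"
    by (rule card_UN_le[OF finAA])
  finally have "card (Lset (Node l r) S) \<le> (\<Sum>A\<in>AA. card (Lset l A) * card (Lset r (S' - A)))"
    by (simp add: card_cartesian_product)
  then have "real (card (Lset (Node l r) S)) \<le> real (\<Sum>A\<in>AA. card (Lset l A) * card (Lset r (S' - A)))"
    by (simp only: of_nat_le_iff)
  then have c1: "real (card (Lset (Node l r) S)) \<le> (\<Sum>A\<in>AA. real (card (Lset l A)) * real (card (Lset r (S' - A))))"
    by simp
  have c2: "real (card (Lset l A)) * real (card (Lset r (S' - A))) \<le> (fact a * th ^ (a - 1)) * (fact b * th ^ (b - 1))"
    if "A \<in> AA" for A
  proof -
    have A: "A \<subseteq> S'" "card A = a" using that by (auto simp: AA_def)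
    have fA: "finite A" using A fS' finite_subset by blast
    have cB: "card (S' - A) = b" using A fA fS' cS' by (simp add: card_Diff_subset)
    have h1: "real (card (Lset l A)) \<le> fact a * th ^ (a - 1)"
      using Node.IH(1)[of A] fA A by (simp add: a_def)
    have h2: "real (card (Lset r (S' - A))) \<le> fact b * th ^ (b - 1)"
      using Node.IH(2)[of "S' - A"] fS' cB by (simp add: b_def)
    show ?thesis by (intro mult_mono h1 h2) (auto simp: th_def)
  qed
  have cAA: "card AA = (a + b) choose a" unfolding AA_def using n_subsets[OF fS', of a] cS' by simp
  have "real (card (Lset (Node l r) S)) \<le> real (card AA) * ((fact a * th ^ (a - 1)) * (fact b * th ^ (b - 1)))"
  proof -
    have "(\<Sum>A\<in>AA. real (card (Lset l A)) * real (card (Lset r (S' - A)))) \<le> (\<Sum>A\<in>AA. (fact a * th ^ (a - 1)) * (fact b * th ^ (b - 1)))"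
      by (rule sum_mono) (rule c2)
    then show ?thesis using c1 by simp
  qed
  also have "\<dots> = fact (a + b) * (th ^ (a - 1) * th ^ (b - 1))"
    unfolding cAA by (rule l1)
  also have "\<dots> \<le> fact (a+b) * (real k * th ^ (k - 1))"
    by (intro mult_left_mono key kab) auto
  also have "\<dots> = fact k * th ^ (k - 1)" using kab by (simp add: algebra_simps)
  finally show ?case by (simp add: k_def)
qed

lemma wt_bound: "wt t \<le> th ^ (tsize t - 1)"
proof -
  have "nlab t = card (Lset t {1..tsize t})" by (simp add: nlab_def Lset_def)
  then have "real (nlab t) \<le> fact (tsize t) * th ^ (tsize t - 1)"
    using Lset_bound[of "{1..tsize t}" t] by simp
  then show ?thesis by (simp add: wt_def field_simps)
qed

lemma wt_nonneg: "wt t \<ge> 0" by (simp add: wt_def)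

fun vc :: "nat \<Rightarrow> real \<Rightarrow> nat \<Rightarrow> real" where
  "vc k e 0 = -1"
| "vc k e (Suc 0) = 1"
| "vc k e (Suc (Suc j)) = (if k \<le> Suc j then e * vc k e (Suc j - k) / (real (Suc (Suc j)) * real (Suc j)) else 0)"

definition Vf :: "nat \<Rightarrow> real \<Rightarrow> 'a::real_algebra_1 fps" where
  "Vf k e = Abs_fps (\<lambda>n. of_real (vc k e n))"

lemma nat_cases3:
  obtains "i = 0" | "i = 1" | j where "i = Suc (Suc j)"
  by (metis One_nat_def not0_implies_Suc)

lemma vc_step:
  assumes "k \<le> Suc j" "e \<ge> 0" "q > 0"
  shows "\<bar>vc k e (Suc (Suc j))\<bar> * q ^ Suc (Suc j) =
         e * q ^ (k + 1) * (\<bar>vc k e (Suc j - k)\<bar> * q ^ (Suc j - k)) / (real (Suc (Suc j)) * real (Suc j))"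
proof -
  have "k + 1 + (Suc j - k) = Suc (Suc j)" using assms(1) by simp
  then have pw: "q ^ Suc (Suc j) = q ^ (k + 1) * q ^ (Suc j - k)" by (metis power_add)
  have "\<bar>vc k e (Suc (Suc j))\<bar> = e * \<bar>vc k e (Suc j - k)\<bar> / (real (Suc (Suc j)) * real (Suc j))"
    using assms by (simp add: abs_mult abs_divide)
  then show ?thesis unfolding pw by (simp add: algebra_simps)
qed

lemma vc_bound_A:
  assumes "q \<ge> 1" "e \<ge> 0" "e * q ^ (k + 1) \<le> 2"
  shows "\<bar>vc k e i\<bar> * q ^ i \<le> q"
proof (induction i rule: less_induct)
  case (less i)
  show ?case
  proof (cases i rule: nat_cases3)
    case 1 then show ?thesis using assms by simp
  next
    case 2 then show ?thesis by simp
  next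
    case (3 j)
    show ?thesis
    proof (cases "k \<le> Suc j")
      case False then show ?thesis using 3 assms by simp
    next
      case True
      have IH: "\<bar>vc k e (Suc j - k)\<bar> * q ^ (Suc j - k) \<le> q" using less.IH 3 by simp
      have X: "e * q ^ (k + 1) * (\<bar>vc k e (Suc j - k)\<bar> * q ^ (Suc j - k)) \<le> 2 * q"
        by (intro mult_mono assms(3) IH) (use assms in auto)
      have d: "real (Suc (Suc j)) * real (Suc j) \<ge> 2"
      proof -
        have "real (Suc (Suc j)) * real (Suc j) \<ge> 2 * 1"
          by (intro mult_mono) auto
        then show ?thesis by simp
      qed
      have X0: "0 \<le> e * q ^ (k + 1) * (\<bar>vc k e (Suc j - k)\<bar> * q ^ (Suc j - k))"
        using assms by simp
      have "e * q ^ (k + 1) * (\<bar>vc k e (Suc j - k)\<bar> * q ^ (Suc j - k)) / (real (Suc (Suc j)) * real (Suc j))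
            \<le> e * q ^ (k + 1) * (\<bar>vc k e (Suc j - k)\<bar> * q ^ (Suc j - k)) / 2"
        by (rule divide_left_mono[OF d X0]) simp
      also have "\<dots> \<le> q" using X by simp
      finally show ?thesis using vc_step[OF True assms(2)] assms(1) 3 by simp
    qed
  qed
qed

lemma aux_div: "(d1::real) \<noteq> 0 \<Longrightarrow> X / (d1 * d2) * d1 = X / d2"
  by (cases "d2 = 0") (simp_all add: field_simps)

lemma aux_div2: "(X::real) \<ge> 0 \<Longrightarrow> d \<ge> 1 \<Longrightarrow> X / d \<le> X"
  by (simp add: divide_le_eq mult_le_cancel_left1)

lemma vc_bound_B:
  assumes "q \<ge> 1" "e \<ge> 0" "e * q ^ (k + 1) \<le> 2" "k \<le> Suc j"
  shows "\<bar>vc k e (Suc (Suc j))\<bar> * q ^ Suc (Suc j) * real (Suc (Suc j)) \<le> e * q ^ (k + 2)"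
proof -
  have IH: "\<bar>vc k e (Suc j - k)\<bar> * q ^ (Suc j - k) \<le> q" by (rule vc_bound_A[OF assms(1-3)])
  have "\<bar>vc k e (Suc (Suc j))\<bar> * q ^ Suc (Suc j) * real (Suc (Suc j)) =
        e * q ^ (k + 1) * (\<bar>vc k e (Suc j - k)\<bar> * q ^ (Suc j - k)) / real (Suc j)"
  proof -
    have q0: "q > 0" using assms(1) by simp
    have "\<bar>vc k e (Suc (Suc j))\<bar> * q ^ Suc (Suc j) * real (Suc (Suc j)) =
        e * q ^ (k + 1) * (\<bar>vc k e (Suc j - k)\<bar> * q ^ (Suc j - k)) / (real (Suc (Suc j)) * real (Suc j)) * real (Suc (Suc j))"
      by (simp only: vc_step[OF assms(4) assms(2) q0])
    also have "\<dots> = e * q ^ (k + 1) * (\<bar>vc k e (Suc j - k)\<bar> * q ^ (Suc j - k)) / real (Suc j)"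
      by (rule aux_div) simp
    finally show ?thesis .
  qed
  also have "\<dots> \<le> e * q ^ (k + 1) * (\<bar>vc k e (Suc j - k)\<bar> * q ^ (Suc j - k))"
    using assms by (intro aux_div2) auto
  also have "\<dots> \<le> e * q ^ (k + 1) * q"
    by (intro mult_left_mono IH) (use assms in auto)
  finally show ?thesis by (simp add: power_add mult_ac)
qed

lemma vc_bound_C:
  assumes "q > 0" "e \<ge> 0"
  shows "\<exists>M. \<forall>i. \<bar>vc k e i\<bar> * q ^ i \<le> M"
proof -
  define J where "J = nat \<lceil>e * q ^ (k + 1)\<rceil> + 2"
  define M where "M = (\<Sum>i<J. \<bar>vc k e i\<bar> * q ^ i)"
  have "\<bar>vc k e i\<bar> * q ^ i \<le> M" for i
  proof (induction i rule: less_induct)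
    case (less i)
    show ?case
    proof (cases "i < J")
      case True
      then show ?thesis unfolding M_def
        by (intro member_le_sum) (use assms in auto)
    next
      case False
      define j where "j = i - 2"
      have i2: "i \<ge> 2" using False unfolding J_def by simp
      have ij: "i = Suc (Suc j)" using i2 unfolding j_def by simp
      have jJ: "J \<le> Suc (Suc j)" using False ij by simp
      show ?thesis
      proof (cases "k \<le> Suc j")
        case False then show ?thesis using ij M_def
          by (simp add: M_def) (intro sum_nonneg, use assms in auto)
      next
        case True
        have IH: "\<bar>vc k e (Suc j - k)\<bar> * q ^ (Suc j - k) \<le> M" using less.IH ij by simp
        have "e * q ^ (k + 1) \<le> real (nat \<lceil>e * q ^ (k + 1)\<rceil>)" by linarith
        also have "\<dots> \<le> real j" using jJ unfolding J_def by simp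
        also have "\<dots> \<le> real (Suc (Suc j)) * real (Suc j)"
        proof -
          have "real j * 1 \<le> real (Suc (Suc j)) * real (Suc j)" by (intro mult_mono) auto
          then show ?thesis by simp
        qed
        finally have eq: "e * q ^ (k + 1) \<le> real (Suc (Suc j)) * real (Suc j)" .
        have M0: "M \<ge> 0" unfolding M_def by (intro sum_nonneg) (use assms in auto)
        have "e * q ^ (k + 1) * (\<bar>vc k e (Suc j - k)\<bar> * q ^ (Suc j - k)) \<le> (real (Suc (Suc j)) * real (Suc j)) * M"
          by (intro mult_mono eq IH) (use assms in auto)
        then have "e * q ^ (k + 1) * (\<bar>vc k e (Suc j - k)\<bar> * q ^ (Suc j - k)) / (real (Suc (Suc j)) * real (Suc j)) \<le> M"
          by (simp add: divide_le_eq mult_ac)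
        then show ?thesis using vc_step[OF True assms(2,1)] ij by simp
      qed
    qed
  qed
  then show ?thesis by blast
qed

lemma ereal_all_ge_imp_inf:
  assumes "\<And>x::real. x \<ge> 1 \<Longrightarrow> ereal x \<le> r"
  shows "r = \<infinity>"
proof (cases r)
  case (real y)
  have "ereal (max 1 (y + 1)) \<le> ereal y" using assms[of "max 1 (y+1)"] real by simp
  then show ?thesis by simp
next
  case MInf
  then show ?thesis using assms[of 1] by simp
qed simp

lemma Vf_radius:
  assumes "e \<ge> 0"
  shows "fps_conv_radius (Vf k e :: 'a::{real_normed_field,banach} fps) = \<infinity>"
proof -
  have "ereal x \<le> fps_conv_radius (Vf k e :: 'a fps)" if x: "x \<ge> 1" for x
  proof -
    obtain M where M: "\<And>i. \<bar>vc k e i\<bar> * (2 * x) ^ i \<le> M"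
      using vc_bound_C[of "2 * x" e k] x assms by auto
    have "summable (\<lambda>n. fps_nth (Vf k e :: 'a fps) n * (of_real x) ^ n)"
    proof (rule summable_norm_cancel, rule summable_comparison_test')
      show "summable (\<lambda>n. M * (1/2) ^ n)" by (intro summable_mult summable_geometric) auto
      fix n
      have "norm (norm (fps_nth (Vf k e :: 'a fps) n * of_real x ^ n)) = \<bar>vc k e n\<bar> * x ^ n"
        using x by (simp add: Vf_def norm_mult norm_power)
      also have "\<dots> = (\<bar>vc k e n\<bar> * (2 * x) ^ n) * (1/2) ^ n"
        by (simp add: power_mult_distrib field_simps)
      also have "\<dots> \<le> M * (1/2) ^ n" by (intro mult_right_mono M) auto
      finally show "norm (norm (fps_nth (Vf k e :: 'a fps) n * of_real x ^ n)) \<le> M * (1/2) ^ n" .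
    qed
    then have "ereal (norm (of_real x :: 'a)) \<le> conv_radius (fps_nth (Vf k e :: 'a fps))"
      by (rule conv_radius_geI)
    then show ?thesis using x by (simp add: fps_conv_radius_def)
  qed
  then show ?thesis by (rule ereal_all_ge_imp_inf)
qed

lemma Vf_nth0 [simp]: "fps_nth (Vf k e) 0 = -1" by (simp add: Vf_def)
lemma Vf_nth1 [simp]: "fps_nth (Vf k e) 1 = 1" by (simp add: Vf_def)

lemma Vf_ode:
  assumes "k \<ge> 1"
  shows "fps_deriv (fps_deriv (Vf k e :: 'a::{real_algebra_1,comm_ring_1} fps)) = fps_const (of_real e) * fps_X ^ (k - 1) * Vf k e"
proof (rule fps_ext)
  fix j
  have "fps_nth (fps_deriv (fps_deriv (Vf k e :: 'a fps))) j = of_real (real (Suc j) * real (Suc (Suc j)) * vc k e (Suc (Suc j)))"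
    by (simp add: Vf_def fps_deriv_def algebra_simps)
  also have "real (Suc j) * real (Suc (Suc j)) * vc k e (Suc (Suc j)) = (if k \<le> Suc j then e * vc k e (Suc j - k) else 0)"
    by simp
  also have "of_real (if k \<le> Suc j then e * vc k e (Suc j - k) else 0) = fps_nth (fps_const (of_real e) * fps_X ^ (k - 1) * Vf k e :: 'a fps) j"
    using assms by (auto simp: Vf_def mult.assoc fps_X_power_mult_nth Suc_diff_le)
  finally show "fps_nth (fps_deriv (fps_deriv (Vf k e :: 'a fps))) j = fps_nth (fps_const (of_real e) * fps_X ^ (k - 1) * Vf k e) j" .
qed

lemma ode_sol:
  fixes V :: "'a::field_char_0 fps"
  assumes v0: "fps_nth V 0 = -1" and v1: "fps_nth V 1 = 1"
    and ode: "fps_deriv (fps_deriv V) = fps_const c * fps_X ^ m * V"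
  shows "fps_nth (-1 - fps_deriv V / V) 0 = 0"
    and "fps_deriv (-1 - fps_deriv V / V) = (1 + (-1 - fps_deriv V / V))^2 - fps_const c * fps_X ^ m"
proof -
  have V0: "fps_nth V 0 \<noteq> 0" using v0 by simp
  define I where "I = inverse V"
  have VI: "V * I = 1" unfolding I_def by (rule inverse_mult_eq_1'[OF V0])
  have S: "-1 - fps_deriv V / V = -1 - fps_deriv V * I" unfolding I_def using V0 by (simp add: fps_divide_unit)
  have dI: "fps_deriv I = - fps_deriv V * I^2" unfolding I_def using V0 by (rule fps_inverse_deriv)
  have I0: "fps_nth I 0 = -1" unfolding I_def using v0 by simp
  show "fps_nth (-1 - fps_deriv V / V) 0 = 0" unfolding S using v1 I0 by simp
  have "fps_deriv (-1 - fps_deriv V * I) = - (fps_deriv (fps_deriv V) * I + fps_deriv V * fps_deriv I)"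
    by simp
  also have "\<dots> = - (fps_const c * fps_X ^ m * (V * I)) + (fps_deriv V * I)^2"
    unfolding ode dI by (simp add: algebra_simps power2_eq_square)
  also have "\<dots> = (1 + (-1 - fps_deriv V * I))^2 - fps_const c * fps_X ^ m"
    unfolding VI by (simp add: power2_eq_square)
  finally show "fps_deriv (-1 - fps_deriv V / V) = (1 + (-1 - fps_deriv V / V))^2 - fps_const c * fps_X ^ m"
    unfolding S .
qed

lemma ode_unique:
  fixes S1 S2 P :: "'a::field_char_0 fps"
  assumes "fps_nth S1 0 = fps_nth S2 0" "fps_deriv S1 = (1 + S1)^2 - P" "fps_deriv S2 = (1 + S2)^2 - P"
  shows "S1 = S2"
proof -
  define D where "D = S1 - S2"
  define E where "E = 2 + S1 + S2"
  have dD: "fps_deriv D = D * E"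
  proof -
    have "fps_deriv D = fps_deriv S1 - fps_deriv S2" unfolding D_def by simp
    also have "\<dots> = (1 + S1)^2 - (1 + S2)^2" using assms(2,3) by simp
    also have "\<dots> = D * E" unfolding D_def E_def by (simp add: power2_eq_square algebra_simps)
    finally show ?thesis .
  qed
  have "fps_nth D n = 0" for n
  proof (induction n rule: less_induct)
    case (less n)
    show ?case
    proof (cases n)
      case 0 then show ?thesis using assms(1) by (simp add: D_def)
    next
      case (Suc n')
      have "of_nat (Suc n') * fps_nth D (Suc n') = fps_nth (fps_deriv D) n'" by simp
      also have "\<dots> = fps_nth (D * E) n'" by (simp only: dD)
      also have "\<dots> = (\<Sum>i=0..n'. fps_nth D i * fps_nth E (n' - i))" by (simp add: fps_mult_nth)
      also have "\<dots> = 0" using less.IH Suc by (intro sum.neutral) auto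
      finally have h: "of_nat (Suc n') * fps_nth D (Suc n') = 0" .
      have nz: "of_nat (Suc n') \<noteq> (0::'a)" by (rule of_nat_neq_0)
      from h nz have "fps_nth D (Suc n') = 0" by (simp only: mult_eq_0_iff) blast
      then show ?thesis using Suc by simp
    qed
  qed
  then show ?thesis unfolding D_def by (simp add: fps_eq_iff)
qed

definition cm :: "real fps \<Rightarrow> complex fps" where
  "cm F = Abs_fps (\<lambda>n. complex_of_real (fps_nth F n))"

lemma cm_nth [simp]: "fps_nth (cm F) n = complex_of_real (fps_nth F n)"
  by (simp add: cm_def)
lemma cm_add: "cm (F + G) = cm F + cm G" by (simp add: fps_eq_iff)
lemma cm_diff: "cm (F - G) = cm F - cm G" by (simp add: fps_eq_iff)
lemma cm_uminus: "cm (- F) = - cm F" by (simp add: fps_eq_iff)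
lemma cm_mult: "cm (F * G) = cm F * cm G" by (simp add: fps_eq_iff fps_mult_nth)
lemma cm_one: "cm 1 = 1" by (simp add: fps_eq_iff fps_one_nth)
lemma cm_const: "cm (fps_const c) = fps_const (complex_of_real c)" by (simp add: fps_eq_iff)
lemma cm_X_power: "cm (fps_X ^ m) = fps_X ^ m" by (simp add: fps_eq_iff)
lemma cm_deriv: "cm (fps_deriv F) = fps_deriv (cm F)" by (simp add: fps_eq_iff)
lemma cm_power2: "cm (F ^ 2) = cm F ^ 2" by (simp add: power2_eq_square cm_mult)
lemma cm_Vf: "cm (Vf k e) = Vf k e" by (simp add: fps_eq_iff Vf_def)

lemma S_fps_eq:
  assumes k1: "tsize t \<ge> 1"
  shows "S_fps t = -1 - fps_deriv (Vf (tsize t) (wt t * real (tsize t))) / Vf (tsize t) (wt t * real (tsize t))"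
    and "cm (S_fps t) = -1 - fps_deriv (Vf (tsize t) (wt t * real (tsize t))) / (Vf (tsize t) (wt t * real (tsize t)) :: complex fps)"
proof -
  define k where "k = tsize t"
  define e where "e = wt t * real (tsize t)"
  define Sr :: "real fps" where "Sr = -1 - fps_deriv (Vf k e) / Vf k e"
  define Sc :: "complex fps" where "Sc = -1 - fps_deriv (Vf k e) / Vf k e"
  have oder: "fps_deriv (fps_deriv (Vf k e :: real fps)) = fps_const e * fps_X ^ (k - 1) * Vf k e"
    using Vf_ode[of k e, where 'a=real] k1 unfolding k_def by simp
  have odec: "fps_deriv (fps_deriv (Vf k e :: complex fps)) = fps_const (of_real e) * fps_X ^ (k - 1) * Vf k e"
    using Vf_ode[of k e, where 'a=complex] k1 unfolding k_def by simp
  have v0r: "fps_nth (Vf k e :: real fps) 0 = -1" and v1r: "fps_nth (Vf k e :: real fps) 1 = 1"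
    by (simp_all add: Vf_def)
  have v0c: "fps_nth (Vf k e :: complex fps) 0 = -1" and v1c: "fps_nth (Vf k e :: complex fps) 1 = 1"
    by (simp_all add: Vf_def)
  have r1: "fps_nth Sr 0 = 0" and r2: "fps_deriv Sr = (1 + Sr)^2 - fps_const e * fps_X ^ (k - 1)"
    unfolding Sr_def using ode_sol[OF v0r v1r oder] by blast+
  have c1: "fps_nth Sc 0 = 0" and c2: "fps_deriv Sc = (1 + Sc)^2 - fps_const (of_real e) * fps_X ^ (k - 1)"
    unfolding Sc_def using ode_sol[OF v0c v1c odec] by blast+
  have SS: "S_fps t = Sr"
    unfolding S_fps_def
  proof (rule the_equality)
    show "fps_nth Sr 0 = 0 \<and> fps_deriv Sr = (1 + Sr)\<^sup>2 - fps_const (wt t * real (tsize t)) * fps_X ^ (tsize t - 1)"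
      using r1 r2 unfolding e_def k_def by simp
  next
    fix S assume A: "fps_nth S 0 = 0 \<and> fps_deriv S = (1 + S)\<^sup>2 - fps_const (wt t * real (tsize t)) * fps_X ^ (tsize t - 1)"
    have P: "fps_const (wt t * real (tsize t)) * fps_X ^ (tsize t - 1) = fps_const e * fps_X ^ (k - 1)"
      by (simp add: e_def k_def)
    show "S = Sr"
    proof (rule ode_unique[of S Sr "fps_const e * fps_X ^ (k - 1)"])
      show "fps_nth S 0 = fps_nth Sr 0" using A r1 by simp
      show "fps_deriv S = (1 + S)^2 - fps_const e * fps_X ^ (k - 1)" using A P by simp
      show "fps_deriv Sr = (1 + Sr)^2 - fps_const e * fps_X ^ (k - 1)" by (rule r2)
    qed
  qed
  then show "S_fps t = -1 - fps_deriv (Vf (tsize t) (wt t * real (tsize t))) / Vf (tsize t) (wt t * real (tsize t))"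
    unfolding Sr_def k_def e_def .
  have m1: "fps_nth (cm Sr) 0 = 0" using r1 by simp
  have m2: "fps_deriv (cm Sr) = (1 + cm Sr)^2 - fps_const (of_real e) * fps_X ^ (k - 1)"
  proof -
    have "fps_deriv (cm Sr) = cm (fps_deriv Sr)" by (simp add: cm_deriv)
    also have "\<dots> = cm ((1 + Sr)^2 - fps_const e * fps_X ^ (k - 1))" by (simp only: r2)
    also have "\<dots> = (1 + cm Sr)^2 - fps_const (of_real e) * fps_X ^ (k - 1)"
      by (simp add: cm_diff cm_power2 cm_add cm_one cm_mult cm_const cm_X_power)
    finally show ?thesis .
  qed
  have "cm Sr = Sc" by (rule ode_unique[OF _ m2 c2]) (simp only: m1 c1)
  then show "cm (S_fps t) = -1 - fps_deriv (Vf (tsize t) (wt t * real (tsize t))) / (Vf (tsize t) (wt t * real (tsize t)) :: complex fps)"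
    unfolding SS Sc_def k_def e_def .
qed

definition bt :: "nat \<Rightarrow> real \<Rightarrow> real \<Rightarrow> real \<Rightarrow> nat \<Rightarrow> real" where
  "bt k e q R n = (if k + 1 \<le> n then e * q ^ (k + 2) * (R / q) ^ n else 0)"

lemma bt_sums:
  assumes "0 \<le> R" "R < q"
  shows "bt k e q R sums (e * q ^ (k + 2) * (R / q) ^ (k + 1) * (1 / (1 - R / q)))"
proof -
  have q0: "q > 0" using assms by simp
  have "(\<lambda>i. bt k e q R (i + (k + 1))) = (\<lambda>i. (e * q ^ (k + 2) * (R / q) ^ (k + 1)) * (R / q) ^ i)"
    by (rule ext) (simp add: bt_def power_add)
  moreover have "(\<lambda>i. (e * q ^ (k + 2) * (R / q) ^ (k + 1)) * (R / q) ^ i) sums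
      ((e * q ^ (k + 2) * (R / q) ^ (k + 1)) * (1 / (1 - R / q)))"
    by (intro sums_mult geometric_sums) (use assms q0 in simp)
  ultimately have "(\<lambda>i. bt k e q R (i + (k + 1))) sums ((e * q ^ (k + 2) * (R / q) ^ (k + 1)) * (1 / (1 - R / q)))"
    by simp
  then show ?thesis by (subst (asm) sums_zero_iff_shift) (auto simp: bt_def)
qed

lemma bt_sums2:
  assumes "0 \<le> R" "R < q" "k \<ge> 1"
  shows "(\<lambda>n. bt k e q R (Suc (Suc n))) sums (e * q ^ (k + 2) * (R / q) ^ (k + 1) * (1 / (1 - R / q)))"
proof -
  have "(\<lambda>i. bt k e q R (i + 2)) sums (e * q ^ (k + 2) * (R / q) ^ (k + 1) * (1 / (1 - R / q)))"
    using bt_sums[OF assms(1,2)] assms(3) by (subst sums_zero_iff_shift) (auto simp: bt_def)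
  then show ?thesis by simp
qed

lemma coef_bound:
  assumes "q \<ge> 1" "e \<ge> 0" "e * q ^ (k + 1) \<le> 2" "0 \<le> R"
  shows "\<bar>vc k e (Suc (Suc j))\<bar> * R ^ Suc (Suc j) * real (Suc (Suc j)) \<le> bt k e q R (Suc (Suc j))"
proof (cases "k \<le> Suc j")
  case True
  have q0: "q > 0" using assms by simp
  have B: "\<bar>vc k e (Suc (Suc j))\<bar> * q ^ Suc (Suc j) * real (Suc (Suc j)) \<le> e * q ^ (k + 2)"
    by (rule vc_bound_B[OF assms(1-3) True])
  have "\<bar>vc k e (Suc (Suc j))\<bar> * R ^ Suc (Suc j) * real (Suc (Suc j)) =
        (\<bar>vc k e (Suc (Suc j))\<bar> * q ^ Suc (Suc j) * real (Suc (Suc j))) * (R / q) ^ Suc (Suc j)"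
    using q0 by (simp add: power_divide)
  also have "\<dots> \<le> e * q ^ (k + 2) * (R / q) ^ Suc (Suc j)"
    by (intro mult_right_mono B) (use assms q0 in simp)
  also have "\<dots> = bt k e q R (Suc (Suc j))" using True by (simp add: bt_def)
  finally show ?thesis .
next
  case False
  then show ?thesis by (simp add: bt_def)
qed

lemma bt_nonneg: "e \<ge> 0 \<Longrightarrow> q > 0 \<Longrightarrow> R \<ge> 0 \<Longrightarrow> bt k e q R n \<ge> 0"
  by (simp add: bt_def)

lemma aux_le_mult: "(x::real) \<ge> 0 \<Longrightarrow> m \<ge> 1 \<Longrightarrow> x \<le> x * m"
  using mult_left_mono[of 1 m x] by simp

lemma Vf_val_bound:
  fixes z :: "'a::{real_normed_field,banach}"
  assumes "q \<ge> 1" "e \<ge> 0" "e * q ^ (k + 1) \<le> 2" "k \<ge> 1" "0 \<le> R" "R < q" "norm z \<le> R"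
  shows "norm (eval_fps (Vf k e) z - (z - 1)) \<le> e * q ^ (k + 2) * (R / q) ^ (k + 1) * (1 / (1 - R / q))"
proof -
  define f where "f = (\<lambda>n. fps_nth (Vf k e) n * z ^ n)"
  have s: "f sums eval_fps (Vf k e) z" unfolding f_def
    by (rule sums_eval_fps) (simp add: Vf_radius assms(2))
  have f0: "f 0 = -1" and f1: "f (Suc 0) = z" by (simp_all add: f_def Vf_def)
  have "(\<lambda>n. f (Suc n)) sums (eval_fps (Vf k e) z - f 0)"
    using s by (subst sums_Suc_iff) simp
  then have "(\<lambda>n. f (Suc (Suc n))) sums (eval_fps (Vf k e) z - f 0 - f (Suc 0))"
    by (subst sums_Suc_iff) simp
  then have s2: "(\<lambda>n. f (Suc (Suc n))) sums (eval_fps (Vf k e) z - (z - 1))"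
    unfolding f0 f1 by (simp add: algebra_simps)
  have bnd: "norm (f (Suc (Suc n))) \<le> bt k e q R (Suc (Suc n))" for n
  proof -
    have "norm (f (Suc (Suc n))) = \<bar>vc k e (Suc (Suc n))\<bar> * norm z ^ Suc (Suc n)"
      by (simp add: f_def Vf_def norm_mult norm_power)
    also have "\<dots> \<le> \<bar>vc k e (Suc (Suc n))\<bar> * R ^ Suc (Suc n)"
      by (intro mult_left_mono power_mono) (use assms in auto)
    also have "\<dots> \<le> \<bar>vc k e (Suc (Suc n))\<bar> * R ^ Suc (Suc n) * real (Suc (Suc n))"
      by (intro aux_le_mult mult_nonneg_nonneg abs_ge_zero zero_le_power) (use assms in auto)
    also have "\<dots> \<le> bt k e q R (Suc (Suc n))" by (rule coef_bound) (use assms in auto)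
    finally show ?thesis .
  qed
  have "norm (eval_fps (Vf k e) z - (z - 1)) = norm (\<Sum>n. f (Suc (Suc n)))"
    using s2 by (simp add: sums_iff)
  also have "\<dots> \<le> (\<Sum>n. bt k e q R (Suc (Suc n)))"
    by (rule norm_suminf_le[OF bnd]) (use bt_sums2[OF assms(5,6,4)] in \<open>simp add: sums_iff\<close>)
  also have "\<dots> = e * q ^ (k + 2) * (R / q) ^ (k + 1) * (1 / (1 - R / q))"
    using bt_sums2[OF assms(5,6,4)] by (simp add: sums_iff)
  finally show ?thesis .
qed

lemma Vf_deriv_bound:
  fixes z :: "'a::{real_normed_field,banach}"
  assumes "q \<ge> 1" "e \<ge> 0" "e * q ^ (k + 1) \<le> 2" "k \<ge> 1" "1 \<le> R" "R < q" "norm z \<le> R"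
  shows "norm (eval_fps (fps_deriv (Vf k e)) z - 1) \<le> e * q ^ (k + 2) * (R / q) ^ (k + 1) * (1 / (1 - R / q))"
proof -
  have rad: "fps_conv_radius (fps_deriv (Vf k e) :: 'a fps) = \<infinity>"
    using fps_conv_radius_deriv[of "Vf k e :: 'a fps"] Vf_radius[OF assms(2), where 'a='a, of k] by simp
  define f where "f = (\<lambda>n. fps_nth (fps_deriv (Vf k e)) n * z ^ n)"
  have fn: "f n = of_real (real (Suc n) * vc k e (Suc n)) * z ^ n" for n
    by (simp add: f_def Vf_def)
  have s: "f sums eval_fps (fps_deriv (Vf k e)) z" unfolding f_def
    by (rule sums_eval_fps) (simp add: rad)
  have f0: "f 0 = 1" by (simp add: fn)
  have s2: "(\<lambda>n. f (Suc n)) sums (eval_fps (fps_deriv (Vf k e)) z - 1)"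
    using s f0 by (subst sums_Suc_iff) simp
  have bnd: "norm (f (Suc n)) \<le> bt k e q R (Suc (Suc n))" for n
  proof -
    have "norm (f (Suc n)) = \<bar>vc k e (Suc (Suc n))\<bar> * norm z ^ Suc n * real (Suc (Suc n))"
      unfolding fn by (simp only: norm_mult norm_of_real norm_power abs_mult) (simp del: vc.simps add: mult_ac)
    also have "\<dots> \<le> \<bar>vc k e (Suc (Suc n))\<bar> * R ^ Suc n * real (Suc (Suc n))"
      by (intro mult_right_mono mult_left_mono power_mono) (use assms in auto)
    also have "\<dots> \<le> \<bar>vc k e (Suc (Suc n))\<bar> * R ^ Suc (Suc n) * real (Suc (Suc n))"
    proof -
      have "R ^ Suc n \<le> R ^ Suc (Suc n)" using assms(5) by (intro power_increasing) auto
      then show ?thesis by (intro mult_right_mono mult_left_mono) auto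
    qed
    also have "\<dots> \<le> bt k e q R (Suc (Suc n))" by (rule coef_bound) (use assms in auto)
    finally show ?thesis .
  qed
  have "norm (eval_fps (fps_deriv (Vf k e)) z - 1) = norm (\<Sum>n. f (Suc n))"
    using s2 by (simp add: sums_iff)
  also have "\<dots> \<le> (\<Sum>n. bt k e q R (Suc (Suc n)))"
    by (rule norm_suminf_le[OF bnd]) (use bt_sums2[OF _ assms(6,4)] assms(5) in \<open>simp add: sums_iff\<close>)
  also have "\<dots> = e * q ^ (k + 2) * (R / q) ^ (k + 1) * (1 / (1 - R / q))"
    using bt_sums2[OF _ assms(6,4)] assms(5) by (simp add: sums_iff)
  finally show ?thesis .
qed

lemma energy_deriv_bound:
  fixes d w p L E' :: real
  assumes "\<bar>p\<bar> \<le> P" "P \<ge> 0"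
  shows "\<bar>2 * d * w + 2 * w * (2 * w - p * d)\<bar> \<le> (5 + P) * (d^2 + w^2)"
proof -
  have a: "\<bar>2 * d * w\<bar> \<le> d^2 + w^2"
  proof -
    have "2 * \<bar>d\<bar> * \<bar>w\<bar> \<le> \<bar>d\<bar>^2 + \<bar>w\<bar>^2" by (rule sum_squares_bound)
    then show ?thesis by (simp add: abs_mult)
  qed
  have "\<bar>2 * w * (2 * w - p * d)\<bar> = \<bar>4 * w^2 - p * (2 * d * w)\<bar>" by (simp add: power2_eq_square algebra_simps)
  also have "\<dots> \<le> \<bar>4 * w^2\<bar> + \<bar>p * (2 * d * w)\<bar>" by (rule abs_triangle_ineq4)
  also have "\<dots> = 4 * w^2 + \<bar>p\<bar> * \<bar>2 * d * w\<bar>" by (simp add: abs_mult)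
  also have "\<dots> \<le> 4 * w^2 + P * (d^2 + w^2)" by (intro add_left_mono mult_mono a assms) auto
  finally have b: "\<bar>2 * w * (2 * w - p * d)\<bar> \<le> 4 * w^2 + P * (d^2 + w^2)" .
  have "\<bar>2 * d * w + 2 * w * (2 * w - p * d)\<bar> \<le> \<bar>2 * d * w\<bar> + \<bar>2 * w * (2 * w - p * d)\<bar>"
    by (rule abs_triangle_ineq)
  also have "\<dots> \<le> (d^2 + w^2) + (4 * w^2 + P * (d^2 + w^2))" using a b by linarith
  also have "\<dots> \<le> (5 + P) * (d^2 + w^2)" by (simp add: algebra_simps)
  finally show ?thesis .
qed

lemma ode2_unique:
  fixes c :: real and m :: nat and u1 u2 w1 w2 :: "real \<Rightarrow> real"
  assumes d1: "\<And>x. (u1 has_real_derivative w1 x) (at x)"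
      and e1: "\<And>x. (w1 has_real_derivative (2 * w1 x - (1 - c * x ^ m) * u1 x)) (at x)"
      and d2: "\<And>x. (u2 has_real_derivative w2 x) (at x)"
      and e2: "\<And>x. (w2 has_real_derivative (2 * w2 x - (1 - c * x ^ m) * u2 x)) (at x)"
      and i1: "u1 0 = u2 0" and i2: "w1 0 = w2 0"
  shows "u1 = u2"
proof
  fix x0 :: real
  define d where "d = (\<lambda>x. u1 x - u2 x)"
  define w where "w = (\<lambda>x. w1 x - w2 x)"
  define p where "p = (\<lambda>x::real. 1 - c * x ^ m)"
  define E where "E = (\<lambda>x. d x ^ 2 + w x ^ 2)"
  define E' where "E' = (\<lambda>x. 2 * d x * w x + 2 * w x * (2 * w x - p x * d x))"
  have dd: "(d has_real_derivative w x) (at x)" for x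
    unfolding d_def w_def by (intro derivative_intros d1 d2)
  have dw: "(w has_real_derivative (2 * w x - p x * d x)) (at x)" for x
  proof -
    have "(w has_real_derivative ((2 * w1 x - (1 - c * x ^ m) * u1 x) - (2 * w2 x - (1 - c * x ^ m) * u2 x))) (at x)"
      unfolding w_def by (intro derivative_intros e1 e2)
    then show ?thesis by (rule DERIV_cong) (simp add: w_def p_def d_def algebra_simps)
  qed
  have dE: "(E has_real_derivative E' x) (at x)" for x
  proof -
    have Eeq: "E = (\<lambda>x. d x * d x + w x * w x)" unfolding E_def by (simp add: power2_eq_square)
    have "(E has_real_derivative (2 * d x * w x + 2 * w x * (2 * w x - p x * d x))) (at x)"
      unfolding Eeq
      by (rule DERIV_cong[OF DERIV_add[OF DERIV_mult[OF dd dd] DERIV_mult[OF dw dw]]]) (simp add: algebra_simps)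
    then show ?thesis unfolding E'_def .
  qed
  have E0: "E 0 = 0" using i1 i2 by (simp add: E_def d_def w_def)
  have Enn: "E x \<ge> 0" for x by (simp add: E_def)
  define X where "X = \<bar>x0\<bar>"
  define P where "P = 1 + \<bar>c\<bar> * X ^ m"
  define L where "L = 5 + P"
  have P0: "P \<ge> 0" by (simp add: P_def X_def)
  have pb: "\<bar>p x\<bar> \<le> P" if "\<bar>x\<bar> \<le> X" for x
  proof -
    have "\<bar>p x\<bar> \<le> 1 + \<bar>c\<bar> * \<bar>x\<bar> ^ m" unfolding p_def
      by (metis abs_mult abs_one abs_triangle_ineq4 power_abs)
    also have "\<dots> \<le> 1 + \<bar>c\<bar> * X ^ m"
      by (intro add_left_mono mult_left_mono power_mono that) auto
    finally show ?thesis unfolding P_def .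
  qed
  have Eb: "\<bar>E' x\<bar> \<le> L * E x" if "\<bar>x\<bar> \<le> X" for x
    unfolding E'_def E_def L_def using energy_deriv_bound[OF pb[OF that] P0] by simp
  have "E x0 = 0"
  proof (cases "x0 \<ge> 0")
    case True
    define F where "F = (\<lambda>x. E x * exp (- L * x))"
    have "F x0 \<le> F 0"
    proof (rule DERIV_nonpos_imp_nonincreasing[OF True])
      fix x assume x: "0 \<le> x" "x \<le> x0"
      have ex: "((\<lambda>x. exp (- L * x)) has_real_derivative (exp (- L * x) * (- L))) (at x)"
        by (auto intro!: derivative_eq_intros)
      have "(F has_real_derivative (E' x * exp (- L * x) + E x * (exp (- L * x) * (- L)))) (at x)"
        unfolding F_def by (rule DERIV_cong[OF DERIV_mult[OF dE ex]]) (simp add: algebra_simps)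
      moreover have "E' x * exp (- L * x) + E x * (exp (- L * x) * (- L)) \<le> 0"
      proof -
        have "E' x \<le> L * E x" using Eb[of x] x X_def by simp
        then have "(E' x - L * E x) * exp (- L * x) \<le> 0" by (simp add: mult_nonpos_nonneg)
        then show ?thesis by (simp add: algebra_simps)
      qed
      ultimately show "\<exists>y. (F has_real_derivative y) (at x) \<and> y \<le> 0" by blast
    qed
    then have "E x0 * exp (- L * x0) \<le> 0" using E0 by (simp add: F_def)
    then have "E x0 \<le> 0" by (simp add: mult_le_0_iff)
    then show ?thesis using Enn[of x0] by simp
  next
    case False
    define G where "G = (\<lambda>x. E x * exp (L * x))"
    have "G x0 \<le> G 0"
    proof (rule DERIV_nonneg_imp_nondecreasing[of x0 0 G])
      show "x0 \<le> 0" using False by simp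
      fix x assume x: "x0 \<le> x" "x \<le> 0"
      have ex: "((\<lambda>x. exp (L * x)) has_real_derivative (exp (L * x) * L)) (at x)"
        by (auto intro!: derivative_eq_intros)
      have "(G has_real_derivative (E' x * exp (L * x) + E x * (exp (L * x) * L))) (at x)"
        unfolding G_def by (rule DERIV_cong[OF DERIV_mult[OF dE ex]]) (simp add: algebra_simps)
      moreover have "E' x * exp (L * x) + E x * (exp (L * x) * L) \<ge> 0"
      proof -
        have "- E' x \<le> L * E x" using Eb[of x] x X_def False by simp
        then have "(E' x + L * E x) * exp (L * x) \<ge> 0" by simp
        then show ?thesis by (simp add: algebra_simps)
      qed
      ultimately show "\<exists>y. (G has_real_derivative y) (at x) \<and> 0 \<le> y" by blast
    qed
    then have "E x0 * exp (L * x0) \<le> 0" using E0 by (simp add: G_def)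
    then have "E x0 \<le> 0" by (simp add: mult_le_0_iff)
    then show ?thesis using Enn[of x0] by simp
  qed
  then have "d x0 = 0" unfolding E_def by (simp add: add_nonneg_eq_0_iff)
  then show "u1 x0 = u2 x0" by (simp add: d_def)
qed

definition qq :: real where "qq = 4/3"
definition RR :: real where "RR = 5/4"
definition Dl :: "nat \<Rightarrow> real \<Rightarrow> real" where
  "Dl k e = e * qq ^ (k + 2) * (RR / qq) ^ (k + 1) * (1 / (1 - RR / qq))"
definition good :: "nat \<Rightarrow> real \<Rightarrow> bool" where
  "good k e \<longleftrightarrow> k \<ge> 1 \<and> e \<ge> 0 \<and> e * qq ^ (k + 1) \<le> 2 \<and> Dl k e \<le> 1/100"

lemma good_val:
  fixes z :: "'a::{real_normed_field,banach}"
  assumes "good k e" "norm z \<le> RR"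
  shows "norm (eval_fps (Vf k e) z - (z - 1)) \<le> 1/100"
proof -
  have "norm (eval_fps (Vf k e) z - (z - 1)) \<le> Dl k e"
    unfolding Dl_def using assms
    by (intro Vf_val_bound) (auto simp: good_def qq_def RR_def)
  then show ?thesis using assms(1) by (simp add: good_def)
qed

lemma good_der:
  fixes z :: "'a::{real_normed_field,banach}"
  assumes "good k e" "norm z \<le> RR"
  shows "norm (eval_fps (fps_deriv (Vf k e)) z - 1) \<le> 1/100"
proof -
  have "norm (eval_fps (fps_deriv (Vf k e)) z - 1) \<le> Dl k e"
    unfolding Dl_def using assms
    by (intro Vf_deriv_bound) (auto simp: good_def qq_def RR_def)
  then show ?thesis using assms(1) by (simp add: good_def)
qed

lemma Vf_radius_deriv:
  assumes "e \<ge> 0"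
  shows "fps_conv_radius (fps_deriv (Vf k e) :: 'a::{real_normed_field,banach} fps) = \<infinity>"
  using fps_conv_radius_deriv[of "Vf k e :: 'a fps"] Vf_radius[OF assms, where 'a='a, of k] by simp

lemma eval_Vf_deriv:
  assumes "e \<ge> 0"
  shows "(eval_fps (Vf k e) has_field_derivative eval_fps (fps_deriv (Vf k e)) z) (at (z::'a::{real_normed_field,banach}))"
  by (rule has_field_derivative_eval_fps) (simp add: Vf_radius[OF assms])

lemma eval_Vf_deriv2:
  assumes "e \<ge> 0"
  shows "(eval_fps (fps_deriv (Vf k e)) has_field_derivative eval_fps (fps_deriv (fps_deriv (Vf k e))) z) (at (z::'a::{real_normed_field,banach}))"
  by (rule has_field_derivative_eval_fps) (simp add: Vf_radius_deriv[OF assms])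

lemma eval_Vf_ode:
  assumes "e \<ge> 0" "k \<ge> 1"
  shows "eval_fps (fps_deriv (fps_deriv (Vf k e))) (x::real) = e * x ^ (k - 1) * eval_fps (Vf k e) x"
proof -
  have r: "fps_conv_radius (Vf k e :: real fps) = \<infinity>" by (rule Vf_radius[OF assms(1)])
  have r2: "fps_conv_radius (fps_X ^ (k - 1) * (Vf k e :: real fps)) = \<infinity>"
    using fps_conv_radius_mult[of "fps_X ^ (k - 1)" "Vf k e :: real fps"] r by simp
  have "fps_deriv (fps_deriv (Vf k e :: real fps)) = fps_const e * (fps_X ^ (k - 1) * Vf k e)"
    using Vf_ode[OF assms(2), of e, where 'a=real] by (simp add: mult.assoc)
  then have "eval_fps (fps_deriv (fps_deriv (Vf k e))) x = eval_fps (fps_const e * (fps_X ^ (k - 1) * Vf k e)) x"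
    by simp
  also have "\<dots> = e * (x ^ (k - 1) * eval_fps (Vf k e) x)"
    using r r2 by (simp add: eval_fps_mult)
  finally show ?thesis by simp
qed

lemma u_sol_eq:
  assumes k1: "tsize t \<ge> 1"
  shows "u_sol t = (\<lambda>x. exp x * eval_fps (Vf (tsize t) (wt t * real (tsize t)) :: real fps) x)"
proof -
  define k where "k = tsize t"
  define e where "e = wt t * real (tsize t)"
  have e0: "e \<ge> 0" unfolding e_def by (simp add: wt_def)
  define v where "v = eval_fps (Vf k e :: real fps)"
  define v' where "v' = eval_fps (fps_deriv (Vf k e) :: real fps)"
  define v'' where "v'' = eval_fps (fps_deriv (fps_deriv (Vf k e)) :: real fps)"
  have dv: "(v has_real_derivative v' x) (at x)" for x
    unfolding v_def v'_def by (rule eval_Vf_deriv[OF e0])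
  have dv': "(v' has_real_derivative v'' x) (at x)" for x
    unfolding v''_def v'_def by (rule eval_Vf_deriv2[OF e0])
  have ode: "v'' x = e * x ^ (k - 1) * v x" for x
    unfolding v''_def v_def using eval_Vf_ode[OF e0] k1 k_def by simp
  define u where "u = (\<lambda>x. exp x * v x)"
  define w where "w = (\<lambda>x. exp x * (v x + v' x))"
  have du: "(u has_real_derivative w x) (at x)" for x
    unfolding u_def w_def by (rule DERIV_cong[OF DERIV_mult[OF DERIV_exp dv]]) (simp add: algebra_simps)
  have dw: "(w has_real_derivative (2 * w x - (1 - e * x ^ (k - 1)) * u x)) (at x)" for x
    unfolding w_def
    by (rule DERIV_cong[OF DERIV_mult[OF DERIV_exp DERIV_add[OF dv dv']]]) (simp add: ode u_def algebra_simps)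
  have u0: "u 0 = -1" by (simp add: u_def v_def eval_fps_at_0 Vf_def)
  have w0: "w 0 = 0" by (simp add: w_def v_def v'_def eval_fps_at_0 Vf_def)
  have "u_sol t = u"
    unfolding u_sol_def
  proof (rule the_equality)
    show "u 0 = -1 \<and> (\<exists>u'. u' 0 = 0 \<and> (\<forall>x. (u has_real_derivative u' x) (at x) \<and>
      (u' has_real_derivative 2 * u' x - (1 - wt t * real (tsize t) * x ^ (tsize t - 1)) * u x) (at x)))"
      using u0 w0 du dw unfolding e_def k_def by blast
  next
    fix u2 assume A: "u2 0 = -1 \<and> (\<exists>u'. u' 0 = 0 \<and> (\<forall>x. (u2 has_real_derivative u' x) (at x) \<and>
      (u' has_real_derivative 2 * u' x - (1 - wt t * real (tsize t) * x ^ (tsize t - 1)) * u2 x) (at x)))"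
    then obtain w2 where w2: "w2 0 = 0" "\<And>x. (u2 has_real_derivative w2 x) (at x)"
      "\<And>x. (w2 has_real_derivative 2 * w2 x - (1 - e * x ^ (k - 1)) * u2 x) (at x)"
      unfolding e_def k_def by blast
    show "u2 = u"
      by (rule ode2_unique[OF w2(2) w2(3) du dw]) (use A u0 w0 w2(1) in auto)
  qed
  then show ?thesis unfolding u_def v_def k_def e_def .
qed

lemma rho_eq:
  assumes k1: "tsize t \<ge> 1" and g: "good (tsize t) (wt t * real (tsize t))"
  shows "49/50 \<le> rho t \<and> rho t \<le> 51/50 \<and> eval_fps (Vf (tsize t) (wt t * real (tsize t)) :: real fps) (rho t) = 0"
proof -
  define k where "k = tsize t"
  define e where "e = wt t * real (tsize t)"
  have e0: "e \<ge> 0" unfolding e_def by (simp add: wt_def)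
  have gk: "good k e" using g unfolding k_def e_def .
  define v where "v = eval_fps (Vf k e :: real fps)"
  define v' where "v' = eval_fps (fps_deriv (Vf k e) :: real fps)"
  have dv: "(v has_real_derivative v' x) (at x)" for x
    unfolding v_def v'_def by (rule eval_Vf_deriv[OF e0])
  have vb: "\<bar>v x - (x - 1)\<bar> \<le> 1/100" if "\<bar>x\<bar> \<le> RR" for x
    using good_val[OF gk, of x] that unfolding v_def by simp
  have v'b: "\<bar>v' x - 1\<bar> \<le> 1/100" if "\<bar>x\<bar> \<le> RR" for x
    using good_der[OF gk, of x] that unfolding v'_def by simp
  have mono: "v a < v b" if "a < b" "\<bar>a\<bar> \<le> RR" "\<bar>b\<bar> \<le> RR" for a b
  proof (rule DERIV_pos_imp_increasing[OF that(1)])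
    fix x assume "a \<le> x" "x \<le> b"
    then have "\<bar>x\<bar> \<le> RR" using that by linarith
    then have "v' x > 0" using v'b[of x] by linarith
    then show "\<exists>y. (v has_real_derivative y) (at x) \<and> 0 < y" using dv by blast
  qed
  have RRv: "RR = 5/4" by (simp add: RR_def)
  obtain r where r: "49/50 \<le> r" "r \<le> 51/50" "v r = 0"
  proof -
    have h: "\<bar>v (49/50) - (49/50 - 1)\<bar> \<le> 1/100" using vb[of "49/50"] RRv by simp
    have "v (49/50) \<le> 0" using h unfolding abs_le_iff by linarith
    moreover have "0 \<le> v (51/50)"
    proof -
      have h: "\<bar>v (51/50) - (51/50 - 1)\<bar> \<le> 1/100" using vb[of "51/50"] RRv by simp
      then show ?thesis unfolding abs_le_iff by linarith
    qed
    moreover have "\<forall>x. 49/50 \<le> x \<and> x \<le> 51/50 \<longrightarrow> isCont v x" using dv DERIV_isCont by blast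
    ultimately obtain x where "x \<ge> 49/50" "x \<le> 51/50" "v x = 0"
      using IVT[of v "49/50" 0 "51/50"] by auto
    then show ?thesis using that by blast
  qed
  have us: "u_sol t = (\<lambda>x. exp x * v x)" unfolding v_def k_def e_def by (rule u_sol_eq[OF k1])
  have "rho t = r"
    unfolding rho_def us
  proof (rule the_equality)
    show "0 < r \<and> exp r * v r = 0 \<and> (\<forall>x. 0 < x \<and> x < r \<longrightarrow> exp x * v x \<noteq> 0)"
    proof (intro conjI allI impI)
      show "0 < r" using r by simp
      show "exp r * v r = 0" using r by simp
      fix x assume x: "0 < x \<and> x < r"
      then have "v x < v r" by (intro mono) (use r RRv in auto)
      then show "exp x * v x \<noteq> 0" using r by simp
    qed
  next
    fix r' assume A: "0 < r' \<and> exp r' * v r' = 0 \<and> (\<forall>x. 0 < x \<and> x < r' \<longrightarrow> exp x * v x \<noteq> 0)"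
    show "r' = r"
    proof (rule ccontr)
      assume ne: "r' \<noteq> r"
      show False
      proof (cases "r < r'")
        case True
        then show False using A r by force
      next
        case False
        then have "r' < r" using ne by simp
        then have "v r' < v r" by (intro mono) (use r RRv A in auto)
        then show False using A r by simp
      qed
    qed
  qed
  then show ?thesis using r unfolding v_def k_def e_def by simp
qed

lemma eval_Vf_of_real:
  assumes "e \<ge> 0"
  shows "eval_fps (Vf k e :: complex fps) (of_real x) = of_real (eval_fps (Vf k e :: real fps) x)"
proof -
  have "(\<lambda>n. fps_nth (Vf k e :: real fps) n * x ^ n) sums eval_fps (Vf k e) x"
    by (rule sums_eval_fps) (simp add: Vf_radius[OF assms])
  then have s1: "(\<lambda>n. complex_of_real (fps_nth (Vf k e :: real fps) n * x ^ n)) sums (of_real (eval_fps (Vf k e) x))"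
    by (rule sums_of_real)
  have eq: "(\<lambda>n. complex_of_real (fps_nth (Vf k e :: real fps) n * x ^ n)) = (\<lambda>n. fps_nth (Vf k e :: complex fps) n * (of_real x) ^ n)"
    by (simp add: Vf_def)
  have s2: "(\<lambda>n. fps_nth (Vf k e :: complex fps) n * (of_real x) ^ n) sums eval_fps (Vf k e) (of_real x)"
    by (rule sums_eval_fps) (simp add: Vf_radius[OF assms])
  show ?thesis using sums_unique2[OF s2 s1[unfolded eq]] .
qed

lemma inverse_const_minus_X:
  assumes "(c::complex) \<noteq> 0"
  shows "inverse (fps_const c - fps_X) = Abs_fps (\<lambda>n. 1 / c ^ (n + 1))"
proof (rule fps_inverse_unique, rule fps_ext)
  fix n
  show "fps_nth ((fps_const c - fps_X) * Abs_fps (\<lambda>n. 1 / c ^ (n + 1))) n = fps_nth 1 n"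
  proof (cases n)
    case 0 then show ?thesis using assms by (simp add: algebra_simps fps_X_mult_nth)
  next
    case (Suc m) then show ?thesis using assms by (simp add: algebra_simps fps_X_mult_nth)
  qed
qed

lemma h_formula:
  fixes a b A B z c :: complex
  assumes h1: "b * (z - c) + a = B" and h2: "a * (z - c) = A" and zc: "z \<noteq> c" and A0: "A \<noteq> 0"
  shows "- (b / a) = - (B / A) + 1 / (z - c)"
proof -
  have zc': "z - c \<noteq> 0" using zc by simp
  have a0: "a \<noteq> 0" using h2 A0 by auto
  have "b * (z - c) = B - a" by (simp add: h1[symmetric])
  then have bq: "b = (B - a) / (z - c)" using zc' by (simp add: eq_divide_eq)
  have "b / a = (B - a) / (a * (z - c))" unfolding bq by simp
  also have "\<dots> = (B - a) / A" using h2 by simp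
  also have "\<dots> = B / A - a / A" by (rule diff_divide_distrib)
  also have "a / A = 1 / (z - c)" unfolding h2[symmetric] using a0 zc' by simp
  finally show ?thesis by simp
qed

lemma coef_main:
  assumes gk: "good k e" and r1: "49/50 \<le> \<rho>" "\<rho> \<le> 51/50"
    and z0: "eval_fps (Vf k e :: real fps) \<rho> = 0" and n1: "n \<ge> 1"
  shows "norm (fps_nth (-1 - fps_deriv (Vf k e) / (Vf k e :: complex fps)) n - of_real (1 / \<rho> ^ (n + 1))) \<le> 15 / (23/20) ^ n"
proof -
  have e0: "e \<ge> 0" using gk by (simp add: good_def)
  define V where "V = eval_fps (Vf k e :: complex fps)"
  define V' where "V' = eval_fps (fps_deriv (Vf k e) :: complex fps)"
  define c where "c = complex_of_real \<rho>"
  have RRv: "RR = 5/4" by (simp add: RR_def)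
  have normc: "norm c = \<rho>" using r1 by (simp add: c_def)
  have c0: "c \<noteq> 0" using r1 by (simp add: c_def)
  have dV: "(V has_field_derivative V' z) (at z)" for z
    unfolding V_def V'_def by (rule eval_Vf_deriv[OF e0])
  have holV: "V holomorphic_on UNIV" unfolding V_def
    by (intro holomorphic_on_eval_fps) (simp add: Vf_radius[OF e0])
  have Vc: "V c = 0" using eval_Vf_of_real[OF e0, of k \<rho>] z0 unfolding V_def c_def by simp
  have Vb: "norm (V z - (z - 1)) \<le> 1/100" if "norm z \<le> RR" for z
    unfolding V_def by (rule good_val[OF gk that])
  have V'b: "norm (V' z - 1) \<le> 1/100" if "norm z \<le> RR" for z
    unfolding V'_def by (rule good_der[OF gk that])
  have lip: "norm ((V z - z) - (V c - c)) \<le> 1/100 * norm (z - c)" if "norm z \<le> RR" for z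
  proof -
    have "norm ((\<lambda>z. V z - z) z - (\<lambda>z. V z - z) c) \<le> 1/100 * norm (z - c)"
    proof (rule field_differentiable_bound[of "cball 0 RR" _ "\<lambda>z. V' z - 1"])
      show "convex (cball (0::complex) RR)" by simp
      fix w assume w: "w \<in> cball (0::complex) RR"
      have "((\<lambda>z. V z - z) has_field_derivative V' w - 1) (at w)"
        by (rule DERIV_diff[OF dV DERIV_ident])
      then show "((\<lambda>z. V z - z) has_field_derivative V' w - 1) (at w within cball 0 RR)"
        by (rule has_field_derivative_at_within)
      show "norm (V' w - 1) \<le> 1/100" using V'b w by simp
    next
      show "z \<in> cball 0 RR" using that by simp
      show "c \<in> cball 0 RR" using normc r1 RRv by simp
    qed
    then show ?thesis by simp
  qed
  have Vnz: "V z \<noteq> 0" if "norm z \<le> RR" "z \<noteq> c" for z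
  proof
    assume Vz: "V z = 0"
    have "norm (c - z) \<le> 1/100 * norm (z - c)" using lip[OF that(1)] Vz Vc by simp
    then have "norm (z - c) \<le> 1/100 * norm (z - c)" by (simp add: norm_minus_commute)
    then have "norm (z - c) \<le> 0" by simp
    then show False using that(2) by simp
  qed
  define g where "g = (\<lambda>z. if z = c then deriv V c else (V z - V c) / (z - c))"
  have holg: "g holomorphic_on UNIV" unfolding g_def by (rule pole_lemma[OF holV]) simp
  have gV: "g z * (z - c) = V z" for z
    by (cases "z = c") (simp_all add: g_def Vc)
  define g' where "g' = deriv g"
  have dg: "(g has_field_derivative g' z) (at z)" for z
    unfolding g'_def using holomorphic_derivI[OF holg open_UNIV, of z UNIV] by simp
  have holg': "g' holomorphic_on UNIV" unfolding g'_def by (rule holomorphic_deriv[OF holg open_UNIV])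
  have gd: "g' z * (z - c) + g z = V' z" for z
  proof -
    have d2: "((\<lambda>z. z - c) has_field_derivative 1) (at z)" by (auto intro!: derivative_eq_intros)
    have "((\<lambda>z. g z * (z - c)) has_field_derivative (g' z * (z - c) + 1 * g z)) (at z)"
      by (rule DERIV_mult[OF dg d2])
    moreover have "(\<lambda>z. g z * (z - c)) = V" using gV by auto
    ultimately have "(V has_field_derivative (g' z * (z - c) + 1 * g z)) (at z)" by simp
    then show ?thesis using DERIV_unique[OF _ dV] by simp
  qed
  have gnz: "g z \<noteq> 0" if "norm z \<le> RR" for z
  proof (cases "z = c")
    case True
    have "g c = V' c" using gd[of c] by simp
    moreover have "V' c \<noteq> 0" using V'b[of c] normc r1 RRv by auto
    ultimately show ?thesis using True by simp
  next
    case False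
    then show ?thesis using Vnz[OF that False] gV[of z] by auto
  qed
  define h where "h = (\<lambda>z. - (g' z / g z))"
  have holh: "h holomorphic_on ball 0 RR" unfolding h_def
    by (intro holomorphic_intros holomorphic_on_subset[OF holg'] holomorphic_on_subset[OF holg]) (auto intro!: gnz)
  have hform: "h z = - (V' z / V z) + 1 / (z - c)" if "norm z \<le> RR" "z \<noteq> c" for z
    unfolding h_def by (rule h_formula[OF gd[of z] gV[of z] that(2) Vnz[OF that]])
  define r :: real where "r = 23/20"
  have hb: "norm (h z) \<le> 15" if "norm z = r" for z
  proof -
    have zR: "norm z \<le> RR" using that by (simp add: r_def RRv)
    have zc: "z \<noteq> c" using that normc r1 by (auto simp: r_def)
    have nzc: "norm (z - c) \<ge> 13/100"
    proof -
      have "norm z - norm c \<le> norm (z - c)" by (rule norm_triangle_ineq2)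
      then show ?thesis using that normc r1 by (simp add: r_def)
    qed
    have nz1: "norm (z - 1) \<ge> 3/20"
    proof -
      have "norm z - norm (1::complex) \<le> norm (z - 1)" by (rule norm_triangle_ineq2)
      then show ?thesis using that by (simp add: r_def)
    qed
    have nV: "norm (V z) \<ge> 7/50"
    proof -
      have "norm (z - 1) \<le> norm (V z) + norm (V z - (z - 1))"
        using norm_triangle_ineq4[of "V z" "V z - (z - 1)"] by simp
      then show ?thesis using Vb[OF zR] nz1 by simp
    qed
    have nV': "norm (V' z) \<le> 101/100"
    proof -
      have "norm (V' z) \<le> norm (V' z - 1) + norm (1::complex)"
        using norm_triangle_ineq[of "V' z - 1" 1] by simp
      then show ?thesis using V'b[OF zR] by simp
    qed
    have "norm (h z) \<le> norm (V' z / V z) + norm (1 / (z - c))"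
      unfolding hform[OF zR zc] using norm_triangle_ineq[of "- (V' z / V z)" "1 / (z - c)"] by simp
    also have "norm (V' z / V z) \<le> (101/100) / (7/50)"
      unfolding norm_divide by (rule frac_le) (use nV' nV in auto)
    also have "norm (1 / (z - c)) \<le> 1 / (13/100)"
      unfolding norm_divide by (rule frac_le) (use nzc in auto)
    finally show ?thesis by simp
  qed
  have cauchy: "norm ((deriv ^^ n) h 0) \<le> fact n * 15 / r ^ n"
  proof (rule Cauchy_inequality)
    show "h holomorphic_on ball 0 r"
      by (rule holomorphic_on_subset[OF holh]) (auto simp: r_def RRv)
    show "continuous_on (cball 0 r) h"
      by (rule continuous_on_subset[OF holomorphic_on_imp_continuous_on[OF holh]]) (auto simp: r_def RRv)
    show "0 < r" by (simp add: r_def)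
    fix x :: complex assume "norm (0 - x) = r"
    then show "norm (h x) \<le> 15" using hb by simp
  qed
  define Vc :: "complex fps" where "Vc = Vf k e"
  have radV: "fps_conv_radius Vc = \<infinity>" unfolding Vc_def by (rule Vf_radius[OF e0])
  have radV': "fps_conv_radius (fps_deriv Vc) = \<infinity>" unfolding Vc_def by (rule Vf_radius_deriv[OF e0])
  have Vc0: "fps_nth Vc 0 \<noteq> 0" by (simp add: Vc_def Vf_def)
  have eV: "V has_fps_expansion Vc" unfolding V_def Vc_def
    by (rule eval_fps_has_fps_expansion) (simp add: Vf_radius[OF e0])
  have eV': "V' has_fps_expansion fps_deriv Vc" unfolding V'_def Vc_def
    by (rule eval_fps_has_fps_expansion) (simp add: Vf_radius_deriv[OF e0])
  have eS: "(\<lambda>z. - 1 - V' z / V z) has_fps_expansion (- 1 - fps_deriv Vc / Vc)"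
    by (rule has_fps_expansion_diff[OF has_fps_expansion_minus[OF has_fps_expansion_1]
          has_fps_expansion_divide'[OF eV' eV Vc0]])
  have an: "h analytic_on {0}"
    using holh analytic_on_open[of "ball 0 RR" h] analytic_on_subset[of h "ball 0 RR" "{0}"]
    by (auto simp: RRv)
  have eH: "h has_fps_expansion fps_expansion h 0" by (rule analytic_at_imp_has_fps_expansion_0[OF an])
  have eI: "(\<lambda>z. inverse (c - z)) has_fps_expansion inverse (fps_const c - fps_X)"
    by (rule has_fps_expansion_inverse[OF has_fps_expansion_diff[OF has_fps_expansion_const has_fps_expansion_fps_X]])
       (simp add: c0)
  define A where "A = - 1 + inverse (fps_const c - fps_X) + fps_expansion h 0"
  have eA: "(\<lambda>z. - 1 + inverse (c - z) + h z) has_fps_expansion A"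
    unfolding A_def by (rule has_fps_expansion_add[OF has_fps_expansion_add[OF has_fps_expansion_minus[OF has_fps_expansion_1] eI] eH])
  have ev: "\<forall>\<^sub>F z in nhds 0. - 1 + inverse (c - z) + h z = - 1 - V' z / V z"
  proof -
    have "\<forall>\<^sub>F z in nhds (0::complex). z \<in> ball 0 \<rho>" using r1 by (intro eventually_nhds_in_open) auto
    then show ?thesis
    proof (rule eventually_mono)
      fix z :: complex assume z: "z \<in> ball 0 \<rho>"
      then have zR: "norm z \<le> RR" using r1 RRv by simp
      have zc: "z \<noteq> c" using z normc by auto
      have "inverse (c - z) + 1 / (z - c) = 0"
      proof -
        have "1 / (z - c) = - inverse (c - z)" by (simp add: divide_inverse inverse_minus_eq[symmetric])
        then show ?thesis by simp
      qed
      then show "- 1 + inverse (c - z) + h z = - 1 - V' z / V z"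
        unfolding hform[OF zR zc] by (simp add: algebra_simps)
    qed
  qed
  have eS2: "(\<lambda>z. - 1 - V' z / V z) has_fps_expansion A"
    using has_fps_expansion_cong[OF ev refl] eA by simp
  have SA: "- 1 - fps_deriv Vc / Vc = A"
  proof (rule fps_ext)
    fix m
    show "fps_nth (- 1 - fps_deriv Vc / Vc) m = fps_nth A m"
      using fps_nth_fps_expansion[OF eS, of m] fps_nth_fps_expansion[OF eS2, of m] by simp
  qed
  have An: "fps_nth A n = 1 / c ^ (n + 1) + (deriv ^^ n) h 0 / fact n"
    using n1 fps_nth_fps_expansion[OF eH, of n]
    by (simp add: A_def inverse_const_minus_X[OF c0])
  have "fps_nth (- 1 - fps_deriv (Vf k e) / (Vf k e :: complex fps)) n - of_real (1 / \<rho> ^ (n + 1)) = (deriv ^^ n) h 0 / fact n"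
    using SA An unfolding Vc_def by (simp add: c_def)
  also have "norm \<dots> \<le> 15 / r ^ n"
  proof -
    have "norm ((deriv ^^ n) h 0 / fact n) = norm ((deriv ^^ n) h 0) / fact n"
      by (simp add: norm_divide)
    also have "\<dots> \<le> (fact n * 15 / r ^ n) / fact n"
      by (rule divide_right_mono[OF cauchy]) simp
    also have "\<dots> = 15 / r ^ n" by simp
    finally show ?thesis .
  qed
  finally show ?thesis by (simp add: r_def)
qed

lemma pow_id1: "(2/3::real) ^ m * (4/3) ^ m = (8/9) ^ m"
  by (simp add: power_mult_distrib[symmetric])
lemma pow_id2: "(2/3::real) ^ m * (5/4) ^ m = (5/6) ^ m"
  by (simp add: power_mult_distrib[symmetric])

lemma aux_pow:
  assumes "(x::real) > 0"
  shows "x ^ (k + 2) * (y / x) ^ (k + 1) = x * y ^ (k + 1)"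
proof -
  have "x ^ (k + 2) * (y / x) ^ (k + 1) = x * ((y / x) ^ (k + 1) * x ^ (k + 1))"
    by (simp add: mult_ac)
  also have "(y / x) ^ (k + 1) * x ^ (k + 1) = (y / x * x) ^ (k + 1)" by (simp only: power_mult_distrib)
  also have "y / x * x = y" using assms by simp
  finally show ?thesis .
qed

lemma aux_eq: "(b::real) > 0 \<Longrightarrow> B > 0 \<Longrightarrow> A / c = (A * b) * (B / c) * inverse (b * B)"
  by (simp add: field_simps)

lemma good_large:
  assumes k1: "tsize t \<ge> 1" and small: "real (tsize t) * (8/9) ^ tsize t \<le> 1/4000"
  shows "good (tsize t) (wt t * real (tsize t))"
proof -
  define k where "k = tsize t"
  obtain m where km: "k = Suc m" using k1 unfolding k_def by (cases "tsize t") auto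
  define e where "e = wt t * real k"
  have e0: "e \<ge> 0" unfolding e_def by (simp add: wt_def)
  have eb: "e \<le> real (Suc m) * (2/3) ^ m"
  proof -
    have "wt t \<le> (2/3) ^ m" using wt_bound[of t] unfolding th_def k_def[symmetric] km by simp
    then have "wt t * real k \<le> (2/3) ^ m * real k" by (intro mult_right_mono) auto
    then show ?thesis unfolding e_def km by (simp add: mult_ac)
  qed
  have sm: "real (Suc m) * (8/9) ^ m \<le> 9/32000"
  proof -
    have "real (Suc m) * (8/9) ^ Suc m \<le> 1/4000" using small unfolding k_def[symmetric] km .
    then show ?thesis by simp
  qed
  have pos: "0 \<le> real (Suc m) * (8/9::real) ^ m" by simp
  have c1: "e * qq ^ (k + 1) \<le> 2"
  proof -
    have "e * qq ^ (k + 1) = e * ((16/9) * (4/3) ^ m)" unfolding km qq_def by simp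
    also have "\<dots> \<le> (real (Suc m) * (2/3) ^ m) * ((16/9) * (4/3) ^ m)"
      by (intro mult_right_mono eb) auto
    also have "\<dots> = (16/9) * (real (Suc m) * ((2/3) ^ m * (4/3) ^ m))" by (simp add: mult_ac)
    also have "\<dots> = (16/9) * (real (Suc m) * (8/9) ^ m)" by (simp only: pow_id1)
    also have "\<dots> \<le> (16/9) * (9/32000)" by (intro mult_left_mono sm) auto
    also have "\<dots> \<le> 2" by simp
    finally show ?thesis .
  qed
  have c2: "Dl k e \<le> 1/100"
  proof -
    have "Dl k e = e * (qq ^ (k + 2) * (RR / qq) ^ (k + 1)) * 16"
      unfolding Dl_def by (simp add: qq_def RR_def)
    also have "qq ^ (k + 2) * (RR / qq) ^ (k + 1) = qq * RR ^ (k + 1)"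
      by (rule aux_pow) (simp add: qq_def)
    also have "e * (qq * RR ^ (k + 1)) * 16 = e * ((100/3) * (5/4) ^ m)"
      unfolding km qq_def RR_def by simp
    also have "\<dots> \<le> (real (Suc m) * (2/3) ^ m) * ((100/3) * (5/4) ^ m)"
      by (intro mult_right_mono eb) auto
    also have "\<dots> = (100/3) * (real (Suc m) * ((2/3) ^ m * (5/4) ^ m))" by (simp add: mult_ac)
    also have "\<dots> = (100/3) * (real (Suc m) * (5/6) ^ m)" by (simp only: pow_id2)
    also have "\<dots> \<le> (100/3) * (real (Suc m) * (8/9) ^ m)"
      by (intro mult_left_mono power_mono) auto
    also have "\<dots> \<le> (100/3) * (9/32000)" by (intro mult_left_mono sm) auto
    also have "\<dots> \<le> 1/100" by simp
    finally show ?thesis .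
  qed
  show ?thesis unfolding good_def using k1 e0 c1 c2 unfolding k_def e_def by simp
qed

lemma T_fps_nth: "n \<ge> 1 \<Longrightarrow> fps_nth T_fps n = 1"
proof -
  assume n: "n \<ge> 1"
  have "T_fps = fps_X * inverse (1 - fps_X)"
    unfolding T_fps_def by (simp add: fps_divide_unit)
  also have "\<dots> = fps_X * Abs_fps (\<lambda>n. 1)" by (simp add: fps_inverse_one_minus_fps_X)
  finally have eq: "T_fps = fps_X * Abs_fps (\<lambda>n. 1)" .
  have "fps_nth (fps_X * Abs_fps (\<lambda>n. 1::real)) n = 1" using n by (simp add: fps_X_mult_nth)
  then show ?thesis unfolding eq .
qed

lemma coef_final:
  assumes k1: "tsize t \<ge> 1" and g: "good (tsize t) (wt t * real (tsize t))" and n1: "n \<ge> 1"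
  shows "\<bar>fps_nth (S_fps t) n - 1 / rho t ^ (n + 1)\<bar> \<le> 15 / (23/20) ^ n"
    and "49/50 \<le> rho t" "rho t \<le> 51/50"
proof -
  have R: "49/50 \<le> rho t \<and> rho t \<le> 51/50 \<and> eval_fps (Vf (tsize t) (wt t * real (tsize t)) :: real fps) (rho t) = 0"
    by (rule rho_eq[OF k1 g])
  then show "49/50 \<le> rho t" "rho t \<le> 51/50" by auto
  have cb: "norm (fps_nth (-1 - fps_deriv (Vf (tsize t) (wt t * real (tsize t))) / (Vf (tsize t) (wt t * real (tsize t)) :: complex fps)) n
      - of_real (1 / rho t ^ (n + 1))) \<le> 15 / (23/20) ^ n"
    using R by (intro coef_main[OF g _ _ _ n1]) auto
  have "fps_nth (cm (S_fps t)) n = fps_nth (-1 - fps_deriv (Vf (tsize t) (wt t * real (tsize t))) / (Vf (tsize t) (wt t * real (tsize t)) :: complex fps)) n"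
    by (simp only: S_fps_eq(2)[OF k1])
  then have "norm (complex_of_real (fps_nth (S_fps t) n) - of_real (1 / rho t ^ (n + 1))) \<le> 15 / (23/20) ^ n"
    using cb by simp
  then have "norm (complex_of_real (fps_nth (S_fps t) n - 1 / rho t ^ (n + 1))) \<le> 15 / (23/20) ^ n"
    by (simp only: of_real_diff)
  then show "\<bar>fps_nth (S_fps t) n - 1 / rho t ^ (n + 1)\<bar> \<le> 15 / (23/20) ^ n"
    by (simp only: norm_of_real)
qed

theorem lemma3p5:
  fixes \<eta> :: real
  assumes "\<eta> > 0"
  shows "\<exists>D::nat. D > 0 \<and> (\<exists>C::real. \<exists>N::nat. \<forall>n\<ge>N. \<forall>t.
           D \<le> tsize t \<and> tsize t \<le> n \<longrightarrow>
           \<bar>fps_nth (S_fps t) n / fps_nth T_fps n - inverse (rho t ^ (n + 1))\<bar>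
             \<le> C * inverse (rho t ^ (n + 1)) * (ln (real n) / real n powr (1 - \<eta>)))"
proof -
  have lim1: "(\<lambda>k::nat. real k * (8/9) ^ k) \<longlonglongrightarrow> 0" by real_asymp
  have "\<forall>\<^sub>F k in sequentially. real k * (8/9::real) ^ k < 1/4000"
    by (rule order_tendstoD(2)[OF lim1]) simp
  then obtain N0 where N0: "\<And>k. k \<ge> N0 \<Longrightarrow> real k * (8/9::real) ^ k < 1/4000"
    unfolding eventually_sequentially by blast
  have lim2: "(\<lambda>n::nat. real n * (102/115) ^ n) \<longlonglongrightarrow> 0" by real_asymp
  have "\<forall>\<^sub>F n in sequentially. real n * (102/115::real) ^ n < 1"
    by (rule order_tendstoD(2)[OF lim2]) simp
  then obtain N1 where N1: "\<And>n. n \<ge> N1 \<Longrightarrow> real n * (102/115::real) ^ n < 1"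
    unfolding eventually_sequentially by blast
  define D where "D = Suc N0"
  define N where "N = max 3 N1"
  have main: "\<bar>fps_nth (S_fps t) n / fps_nth T_fps n - inverse (rho t ^ (n + 1))\<bar>
             \<le> 16 * inverse (rho t ^ (n + 1)) * (ln (real n) / real n powr (1 - \<eta>))"
    if n: "n \<ge> N" and t: "D \<le> tsize t" for n t
  proof -
    have k1: "tsize t \<ge> 1" using t by (simp add: D_def)
    have g: "good (tsize t) (wt t * real (tsize t))"
      using good_large[OF k1] N0[of "tsize t"] t by (simp add: D_def)
    have n1: "n \<ge> 1" and n3: "n \<ge> 3" and nN1: "n \<ge> N1" using n by (auto simp: N_def)
    note cf = coef_final[OF k1 g n1]
    define \<rho> where "\<rho> = rho t"
    have r1: "49/50 \<le> \<rho>" "\<rho> \<le> 51/50" using cf(2,3) by (auto simp: \<rho>_def)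
    have rpos: "\<rho> > 0" using r1 by simp
    define a where "a = inverse (\<rho> ^ (n + 1))"
    have apos: "a > 0" unfolding a_def using rpos by simp
    have lhs: "\<bar>fps_nth (S_fps t) n / fps_nth T_fps n - inverse (rho t ^ (n + 1))\<bar> \<le> 15 / (23/20) ^ n"
    proof -
      have T1: "fps_nth T_fps n = 1" by (rule T_fps_nth[OF n1])
      have "fps_nth (S_fps t) n / fps_nth T_fps n - inverse (rho t ^ (n + 1)) = fps_nth (S_fps t) n - 1 / rho t ^ (n + 1)"
        unfolding T1 by (simp only: div_by_1 inverse_eq_divide)
      then show ?thesis using cf(1) by (simp only:)
    qed
    have ainv: "inverse ((51/50::real) ^ (n + 1)) \<le> a"
    proof -
      have "\<rho> ^ (n + 1) \<le> (51/50) ^ (n + 1)" using r1 rpos by (intro power_mono) auto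
      moreover have "0 < \<rho> ^ (n + 1)" using rpos by (rule zero_less_power)
      ultimately show ?thesis unfolding a_def by (rule le_imp_inverse_le)
    qed
    have xn: "(102/115::real) ^ n \<le> 1 / real n"
    proof (rule pos_le_divide_eq[THEN iffD2])
      show "0 < real n" using n1 by simp
      show "(102/115::real) ^ n * real n \<le> 1" using N1[OF nN1] by (metis mult.commute less_imp_le)
    qed
    have eq15: "15 / (23/20::real) ^ n = (15 * (51/50)) * (102/115) ^ n * inverse ((51/50) ^ (n + 1))"
    proof -
      have e1: "(102/115::real) ^ n = (51/50) ^ n / (23/20) ^ n"
      proof -
        have "(51/50::real) ^ n / (23/20) ^ n = ((51/50) / (23/20)) ^ n" by (rule power_divide[symmetric])
        also have "(51/50::real) / (23/20) = 102/115" by simp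
        finally show ?thesis by (rule sym)
      qed
      have e2: "(51/50::real) ^ (n + 1) = (51/50) * (51/50) ^ n"
        by (simp only: Suc_eq_plus1[symmetric] power_Suc)
      show ?thesis unfolding e1 e2 by (rule aux_eq) simp_all
    qed
    have "15 / (23/20::real) ^ n \<le> (15 * (51/50)) * (1 / real n) * inverse ((51/50) ^ (n + 1))"
      unfolding eq15 by (intro mult_right_mono mult_left_mono xn) auto
    also have "\<dots> \<le> 16 * (1 / real n) * a"
      by (intro mult_mono ainv) auto
    also have "\<dots> \<le> 16 * a * (ln (real n) / real n powr (1 - \<eta>))"
    proof -
      have np: "real n powr (1 - \<eta>) > 0" using n1 by simp
      have "real n powr (1 - \<eta>) \<le> real n powr 1"
        using n1 assms by (intro powr_mono) auto
      then have npl: "real n powr (1 - \<eta>) \<le> real n" using n1 by simp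
      have ln1: "ln (real n) \<ge> 1"
      proof -
        have "exp 1 \<le> real n" using exp_le n3 by linarith
        then have "ln (exp 1) \<le> ln (real n)" by (intro ln_mono) auto
        then show ?thesis by simp
      qed
      have "1 / real n \<le> 1 / real n powr (1 - \<eta>)"
        using np npl by (intro divide_left_mono) auto
      also have "\<dots> \<le> ln (real n) / real n powr (1 - \<eta>)"
        using np ln1 by (intro divide_right_mono) auto
      finally have "1 / real n \<le> ln (real n) / real n powr (1 - \<eta>)" .
      then have "16 * (1 / real n) * a \<le> 16 * (ln (real n) / real n powr (1 - \<eta>)) * a"
        using apos by (intro mult_right_mono mult_left_mono) auto
      then show ?thesis by (simp only: mult_ac)
    qed
    finally show ?thesis using lhs unfolding a_def \<rho>_def by linarith
  qed
  show ?thesis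
    by (rule exI[of _ D], rule conjI, simp add: D_def, rule exI[of _ 16], rule exI[of _ N]) (use main in blast)
qed

end
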